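(* Let $\mathcal A$ be a VS unital $*$-subalgebra of $\mathrm{Mat}(\mathbb{Z}^D,p)$ with commutant $\mathcal B$ within $\mathrm{Mat}(\mathbb{Z}^D,p)$. Then the multiplication map $\mathrm{mul}:\mathcal A\otimes\mathcal B\to\mathcal A\mathcal B$, $\sum_ia_i\otimes b_i\mapsto\sum_ia_ib_i$, is a $*$-algebra isomorphism, where $\mathcal A\mathcal B$ denotes the linear span of all products $ab$ with $a\in\mathcal A$, $b\in\mathcal B$.
   Context: For $p:\mathbb{Z}^D\to\mathbb{Z}_{>0}$ and finite $S$, $\mathrm{Mat}(S,p)=\bigotimes_{s\in S}M_{p(s)}(\mathbb{C})$ with embeddings by tensoring identities; $\mathrm{Mat}(\mathbb{Z}^D,p)$ is the union. $\mathrm{Supp}(x)$ is the smallest finite $S$ with $x\in\mathrm{Mat}(S,p)$; $S^{+\ell}$ is the set of sites at $\ell_\infty$-distance at most $\ell$ from $S$. A $*$-subalgebra $\mathcal A$ is VS if there is $\ell>0$ such that for every $a\in\mathcal A\setminus\mathbb{C}\mathbf 1$ and every $s\in\mathrm{Supp}(a)$ there is $w\in\mathcal A\cap\mathrm{Mat}(\{s\}^{+\ell},p)$ with $[a,w]\neq0$. The tensor product is the algebraic tensor product over $\mathbb{C}$. *)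

theory Defs
  imports "HOL-Analysis.Finite_Cartesian_Product"
begin

text \<open>Sites of Z^D are vectors int^'d with 'd a finite index type (so D = CARD('d)).
  A configuration assigns to each site s a basis index < p s.  An operator is
  represented by its matrix kernel on configurations (matrix units of the
  tensor product of the C^(p s)).\<close>

type_synonym 'd site = "int ^ 'd"
type_synonym 'd cfg = "'d site \<Rightarrow> nat"
type_synonym 'd op = "('d cfg \<times> 'd cfg) \<Rightarrow> complex"

definition fzero :: "'x \<Rightarrow> complex" where "fzero = (\<lambda>_. 0)"
definition fadd :: "('x \<Rightarrow> complex) \<Rightarrow> ('x \<Rightarrow> complex) \<Rightarrow> ('x \<Rightarrow> complex)"
  where "fadd f g = (\<lambda>x. f x + g x)"
definition fsub :: "('x \<Rightarrow> complex) \<Rightarrow> ('x \<Rightarrow> complex) \<Rightarrow> ('x \<Rightarrow> complex)"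
  where "fsub f g = (\<lambda>x. f x - g x)"
definition fscale :: "complex \<Rightarrow> ('x \<Rightarrow> complex) \<Rightarrow> ('x \<Rightarrow> complex)"
  where "fscale k f = (\<lambda>x. k * f x)"

definition cspan :: "('x \<Rightarrow> complex) set \<Rightarrow> ('x \<Rightarrow> complex) set" where
  "cspan V = {v. \<exists>F c. finite F \<and> F \<subseteq> V \<and> v = (\<lambda>x. \<Sum>u\<in>F. c u * u x)}"

definition cfgs :: "('d site \<Rightarrow> nat) \<Rightarrow> 'd cfg set" where
  "cfgs p = {\<sigma>. \<forall>s. \<sigma> s < p s}"

text \<open>X belongs to Mat(S,p): S finite, X acts as the identity outside S and its
  matrix elements only depend on the configurations restricted to S.\<close>
definition local_in :: "('d site \<Rightarrow> nat) \<Rightarrow> 'd site set \<Rightarrow> 'd op \<Rightarrow> bool" where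
  "local_in p S X \<longleftrightarrow> finite S \<and>
     (\<forall>\<sigma> \<tau>. X (\<sigma>, \<tau>) \<noteq> 0 \<longrightarrow> \<sigma> \<in> cfgs p \<and> \<tau> \<in> cfgs p \<and> (\<forall>s. s \<notin> S \<longrightarrow> \<sigma> s = \<tau> s)) \<and>
     (\<forall>\<sigma> \<tau> \<sigma>' \<tau>'. \<sigma> \<in> cfgs p \<longrightarrow> \<tau> \<in> cfgs p \<longrightarrow> \<sigma>' \<in> cfgs p \<longrightarrow> \<tau>' \<in> cfgs p \<longrightarrow>
        (\<forall>s\<in>S. \<sigma> s = \<sigma>' s \<and> \<tau> s = \<tau>' s) \<longrightarrow>
        (\<forall>s. s \<notin> S \<longrightarrow> \<sigma> s = \<tau> s \<and> \<sigma>' s = \<tau>' s) \<longrightarrow>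
        X (\<sigma>, \<tau>) = X (\<sigma>', \<tau>'))"

definition Mat_loc :: "('d site \<Rightarrow> nat) \<Rightarrow> 'd site set \<Rightarrow> 'd op set" where
  "Mat_loc p S = {X. local_in p S X}"

definition Mat :: "('d site \<Rightarrow> nat) \<Rightarrow> 'd op set" where
  "Mat p = (\<Union>S. Mat_loc p S)"

text \<open>Algebra operations (well-defined on Mat p: the sum is finite for local X).\<close>
definition op_mult :: "'d op \<Rightarrow> 'd op \<Rightarrow> 'd op" where
  "op_mult X Y = (\<lambda>(\<sigma>, \<tau>). \<Sum>\<rho>\<in>{\<rho>. X (\<sigma>, \<rho>) \<noteq> 0}. X (\<sigma>, \<rho>) * Y (\<rho>, \<tau>))"

definition op_star :: "'d op \<Rightarrow> 'd op" where
  "op_star X = (\<lambda>(\<sigma>, \<tau>). cnj (X (\<tau>, \<sigma>)))"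

definition op_one :: "('d site \<Rightarrow> nat) \<Rightarrow> 'd op" where
  "op_one p = (\<lambda>(\<sigma>, \<tau>). if \<sigma> = \<tau> \<and> \<sigma> \<in> cfgs p then 1 else 0)"

definition Supp :: "('d site \<Rightarrow> nat) \<Rightarrow> 'd op \<Rightarrow> 'd site set" where
  "Supp p X = (THE S. local_in p S X \<and> (\<forall>T. local_in p T X \<longrightarrow> S \<subseteq> T))"

definition linf_dist :: "'d::finite site \<Rightarrow> 'd site \<Rightarrow> int" where
  "linf_dist s t = Max (range (\<lambda>i. \<bar>s $ i - t $ i\<bar>))"

definition thicken :: "'d::finite site set \<Rightarrow> nat \<Rightarrow> 'd site set" where
  "thicken S l = {t. \<exists>s\<in>S. linf_dist s t \<le> int l}"

definition unital_star_subalg :: "('d site \<Rightarrow> nat) \<Rightarrow> 'd op set \<Rightarrow> bool" where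
  "unital_star_subalg p A \<longleftrightarrow> A \<subseteq> Mat p \<and> op_one p \<in> A \<and>
     (\<forall>x\<in>A. \<forall>y\<in>A. fadd x y \<in> A \<and> op_mult x y \<in> A) \<and>
     (\<forall>k. \<forall>x\<in>A. fscale k x \<in> A) \<and> (\<forall>x\<in>A. op_star x \<in> A)"

definition VS :: "('d::finite site \<Rightarrow> nat) \<Rightarrow> 'd op set \<Rightarrow> bool" where
  "VS p A \<longleftrightarrow> (\<exists>l::nat. l > 0 \<and>
     (\<forall>a\<in>A. a \<notin> {fscale k (op_one p) | k. True} \<longrightarrow>
        (\<forall>s\<in>Supp p a. \<exists>w\<in>A \<inter> Mat_loc p (thicken {s} l). op_mult a w \<noteq> op_mult w a)))"

definition commutant :: "('d site \<Rightarrow> nat) \<Rightarrow> 'd op set \<Rightarrow> 'd op set" where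
  "commutant p A = {b\<in>Mat p. \<forall>a\<in>A. op_mult a b = op_mult b a}"

definition prodspan :: "'d op set \<Rightarrow> 'd op set \<Rightarrow> 'd op set" where
  "prodspan A B = cspan {op_mult a b | a b. a \<in> A \<and> b \<in> B}"

text \<open>Free vector space on A \<times> B (finitely supported coefficient functions),
  modulo the bilinearity relations; elements of A \<otimes> B are the cosets.\<close>

definition free :: "'d op set \<Rightarrow> 'd op set \<Rightarrow> ('d op \<times> 'd op \<Rightarrow> complex) set" where
  "free A B = {c. finite {z. c z \<noteq> 0} \<and> {z. c z \<noteq> 0} \<subseteq> A \<times> B}"

definition etens :: "'d op \<Rightarrow> 'd op \<Rightarrow> ('d op \<times> 'd op \<Rightarrow> complex)" where
  "etens a b = (\<lambda>z. if z = (a, b) then 1 else 0)"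

definition trel :: "'d op set \<Rightarrow> 'd op set \<Rightarrow> ('d op \<times> 'd op \<Rightarrow> complex) set" where
  "trel A B = cspan (
     {fsub (etens (fadd a a') b) (fadd (etens a b) (etens a' b)) | a a' b. a \<in> A \<and> a' \<in> A \<and> b \<in> B} \<union>
     {fsub (etens a (fadd b b')) (fadd (etens a b) (etens a b')) | a b b'. a \<in> A \<and> b \<in> B \<and> b' \<in> B} \<union>
     {fsub (etens (fscale k a) b) (fscale k (etens a b)) | k a b. a \<in> A \<and> b \<in> B} \<union>
     {fsub (etens a (fscale k b)) (fscale k (etens a b)) | k a b. a \<in> A \<and> b \<in> B})"

definition tclass :: "'d op set \<Rightarrow> 'd op set \<Rightarrow> ('d op \<times> 'd op \<Rightarrow> complex) \<Rightarrow> ('d op \<times> 'd op \<Rightarrow> complex) set" where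
  "tclass A B c = {c' \<in> free A B. fsub c c' \<in> trel A B}"

definition tensor :: "'d op set \<Rightarrow> 'd op set \<Rightarrow> ('d op \<times> 'd op \<Rightarrow> complex) set set" where
  "tensor A B = tclass A B ` free A B"

definition rep :: "('d op \<times> 'd op \<Rightarrow> complex) set \<Rightarrow> ('d op \<times> 'd op \<Rightarrow> complex)" where
  "rep X = (SOME c. c \<in> X)"

text \<open>Algebra structure on the free space: (a\<otimes>b)(a'\<otimes>b') = aa'\<otimes>bb', (a\<otimes>b)* = a*\<otimes>b*.\<close>
definition fconv :: "('d op \<times> 'd op \<Rightarrow> complex) \<Rightarrow> ('d op \<times> 'd op \<Rightarrow> complex) \<Rightarrow> ('d op \<times> 'd op \<Rightarrow> complex)" where
  "fconv c d = (\<lambda>z. \<Sum>(x, y)\<in>{x. c x \<noteq> 0} \<times> {y. d y \<noteq> 0}.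
      if (op_mult (fst x) (fst y), op_mult (snd x) (snd y)) = z then c x * d y else 0)"

definition fstar :: "('d op \<times> 'd op \<Rightarrow> complex) \<Rightarrow> ('d op \<times> 'd op \<Rightarrow> complex)" where
  "fstar c = (\<lambda>z. \<Sum>x\<in>{x. c x \<noteq> 0}.
      if (op_star (fst x), op_star (snd x)) = z then cnj (c x) else 0)"

definition tadd where "tadd A B X Y = tclass A B (fadd (rep X) (rep Y))"
definition tscale where "tscale A B k X = tclass A B (fscale k (rep X))"
definition tmult where "tmult A B X Y = tclass A B (fconv (rep X) (rep Y))"
definition tstar where "tstar A B X = tclass A B (fstar (rep X))"
definition tone where "tone p A B = tclass A B (etens (op_one p) (op_one p))"

definition mulmap :: "('d op \<times> 'd op \<Rightarrow> complex) set \<Rightarrow> 'd op" where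
  "mulmap X = (let c = rep X in
     (\<lambda>x. \<Sum>z\<in>{z. c z \<noteq> 0}. c z * op_mult (fst z) (snd z) x))"

end

theory Submission
  imports Defs "HOL-Library.Function_Algebras"
begin

lemma fadd_eq: "fadd f g = f + g" by (simp add: fadd_def fun_eq_iff)
lemma fsub_eq: "fsub f g = f - g" by (simp add: fsub_def fun_eq_iff)
lemma fzero_eq: "fzero = 0" by (simp add: fzero_def fun_eq_iff)

interpretation fv: vector_space "fscale :: complex \<Rightarrow> ('x \<Rightarrow> complex) \<Rightarrow> ('x \<Rightarrow> complex)"
  by unfold_locales (auto simp: fscale_def fun_eq_iff algebra_simps)

lemma fscale_apply[simp]: "fscale k f x = k * f x" by (simp add: fscale_def)
lemma fsum_apply: "(\<Sum>i\<in>I. f i) x = (\<Sum>i\<in>I. f i x)"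
  by (induction I rule: infinite_finite_induct) auto

definition rowset :: "('d site \<Rightarrow> nat) \<Rightarrow> 'd site set \<Rightarrow> 'd cfg \<Rightarrow> 'd cfg set" where
  "rowset p S \<sigma> = {\<rho>\<in>cfgs p. \<forall>s. s \<notin> S \<longrightarrow> \<rho> s = \<sigma> s}"

lemma finite_rowset: assumes "finite S" shows "finite (rowset p S \<sigma>)"
proof -
  have "rowset p S \<sigma> \<subseteq> (\<lambda>f s. if s \<in> S then f s else \<sigma> s) ` (PiE S (\<lambda>s. {..<p s}))"
  proof
    fix \<rho> assume r: "\<rho> \<in> rowset p S \<sigma>"
    have "\<rho> = (\<lambda>s. if s \<in> S then restrict \<rho> S s else \<sigma> s)"
      using r by (auto simp: rowset_def fun_eq_iff)
    moreover have "restrict \<rho> S \<in> PiE S (\<lambda>s. {..<p s})"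
      using r by (auto simp: rowset_def cfgs_def)
    ultimately show "\<rho> \<in> (\<lambda>f s. if s \<in> S then f s else \<sigma> s) ` (PiE S (\<lambda>s. {..<p s}))"
      by blast
  qed
  moreover have "finite (PiE S (\<lambda>s. {..<p s}))" using assms by (simp add: finite_PiE)
  ultimately show ?thesis by (meson finite_surj)
qed

lemma rowset_same: "\<mu> \<in> rowset p S \<sigma> \<Longrightarrow> rowset p S \<mu> = rowset p S \<sigma>"
  by (auto simp: rowset_def)

lemma rowset_sym: "\<mu> \<in> rowset p S \<sigma> \<Longrightarrow> \<sigma> \<in> cfgs p \<Longrightarrow> \<sigma> \<in> rowset p S \<mu>"
  by (auto simp: rowset_def)

lemma local_finite: "local_in p S X \<Longrightarrow> finite S" by (simp add: local_in_def)

lemma local_nz: "local_in p S X \<Longrightarrow> X (\<sigma>, \<tau>) \<noteq> 0 \<Longrightarrow> \<sigma> \<in> cfgs p \<and> \<tau> \<in> cfgs p \<and> (\<forall>s. s \<notin> S \<longrightarrow> \<sigma> s = \<tau> s)"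
  unfolding local_in_def by blast

lemma local_eq: "local_in p S X \<Longrightarrow> \<sigma> \<in> cfgs p \<Longrightarrow> \<tau> \<in> cfgs p \<Longrightarrow> \<sigma>' \<in> cfgs p \<Longrightarrow> \<tau>' \<in> cfgs p \<Longrightarrow>
   (\<And>s. s\<in>S \<Longrightarrow> \<sigma> s = \<sigma>' s \<and> \<tau> s = \<tau>' s) \<Longrightarrow> (\<And>s. s \<notin> S \<Longrightarrow> \<sigma> s = \<tau> s \<and> \<sigma>' s = \<tau>' s) \<Longrightarrow>
   X (\<sigma>, \<tau>) = X (\<sigma>', \<tau>')"
  unfolding local_in_def by blast

lemma local_inI:
  assumes "finite S"
    and "\<And>\<sigma> \<tau>. X (\<sigma>, \<tau>) \<noteq> 0 \<Longrightarrow> \<sigma> \<in> cfgs p \<and> \<tau> \<in> cfgs p \<and> (\<forall>s. s \<notin> S \<longrightarrow> \<sigma> s = \<tau> s)"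
    and "\<And>\<sigma> \<tau> \<sigma>' \<tau>'. \<sigma> \<in> cfgs p \<Longrightarrow> \<tau> \<in> cfgs p \<Longrightarrow> \<sigma>' \<in> cfgs p \<Longrightarrow> \<tau>' \<in> cfgs p \<Longrightarrow>
        (\<forall>s\<in>S. \<sigma> s = \<sigma>' s \<and> \<tau> s = \<tau>' s) \<Longrightarrow>
        (\<forall>s. s \<notin> S \<longrightarrow> \<sigma> s = \<tau> s \<and> \<sigma>' s = \<tau>' s) \<Longrightarrow> X (\<sigma>, \<tau>) = X (\<sigma>', \<tau>')"
  shows "local_in p S X"
  unfolding local_in_def using assms by blast

lemma local_row: "local_in p S X \<Longrightarrow> X (\<sigma>, \<rho>) \<noteq> 0 \<Longrightarrow> \<rho> \<in> rowset p S \<sigma>"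
  by (auto simp: rowset_def dest: local_nz)

lemma local_col: "local_in p S X \<Longrightarrow> X (\<rho>, \<tau>) \<noteq> 0 \<Longrightarrow> \<rho> \<in> rowset p S \<tau>"
  by (auto simp: rowset_def dest: local_nz)

lemma local_notcfg: "local_in p S X \<Longrightarrow> \<sigma> \<notin> cfgs p \<or> \<tau> \<notin> cfgs p \<Longrightarrow> X (\<sigma>, \<tau>) = 0"
  by (auto dest: local_nz)

lemma op_mult_sum: "finite F \<Longrightarrow> {\<rho>. X (\<sigma>, \<rho>) \<noteq> 0} \<subseteq> F \<Longrightarrow>
    op_mult X Y (\<sigma>, \<tau>) = (\<Sum>\<rho>\<in>F. X (\<sigma>, \<rho>) * Y (\<rho>, \<tau>))"
  unfolding op_mult_def by (simp, rule sum.mono_neutral_left) auto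

lemma op_mult_row: "local_in p S X \<Longrightarrow>
    op_mult X Y (\<sigma>, \<tau>) = (\<Sum>\<rho>\<in>rowset p S \<sigma>. X (\<sigma>, \<rho>) * Y (\<rho>, \<tau>))"
  by (rule op_mult_sum) (auto simp: finite_rowset local_finite local_row)

lemma local_mono:
  assumes X: "local_in p S X" and sub: "S \<subseteq> S'" and fin: "finite S'"
  shows "local_in p S' X"
proof (rule local_inI)
  show "finite S'" by fact
next
  fix \<sigma> \<tau> assume "X (\<sigma>, \<tau>) \<noteq> 0"
  then show "\<sigma> \<in> cfgs p \<and> \<tau> \<in> cfgs p \<and> (\<forall>s. s \<notin> S' \<longrightarrow> \<sigma> s = \<tau> s)"
    using local_nz[OF X] sub by blast
next
  fix \<sigma> \<tau> \<sigma>' \<tau>'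
  assume c: "\<sigma> \<in> cfgs p" "\<tau> \<in> cfgs p" "\<sigma>' \<in> cfgs p" "\<tau>' \<in> cfgs p"
  assume ag: "\<forall>s\<in>S'. \<sigma> s = \<sigma>' s \<and> \<tau> s = \<tau>' s"
  assume out: "\<forall>s. s \<notin> S' \<longrightarrow> \<sigma> s = \<tau> s \<and> \<sigma>' s = \<tau>' s"
  show "X (\<sigma>, \<tau>) = X (\<sigma>', \<tau>')"
  proof (cases "\<exists>s\<in>S'-S. \<sigma> s \<noteq> \<tau> s")
    case True
    then obtain s where s: "s \<in> S'" "s \<notin> S" "\<sigma> s \<noteq> \<tau> s" by blast
    have "X (\<sigma>, \<tau>) = 0" using local_nz[OF X, of \<sigma> \<tau>] s by blast
    moreover have "X (\<sigma>', \<tau>') = 0" using local_nz[OF X, of \<sigma>' \<tau>'] s ag by force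
    ultimately show ?thesis by simp
  next
    case False
    show ?thesis
      by (rule local_eq[OF X c]) (use ag out sub False in force)+
  qed
qed

lemma local_zero: "finite S \<Longrightarrow> local_in p S (\<lambda>_. 0)"
  by (simp add: local_in_def)

lemma local_one: "local_in p {} (op_one p)"
proof (rule local_inI)
  fix \<sigma> \<tau> :: "'a site \<Rightarrow> nat" assume "op_one p (\<sigma>, \<tau>) \<noteq> 0"
  then show "\<sigma> \<in> cfgs p \<and> \<tau> \<in> cfgs p \<and> (\<forall>s. s \<notin> {} \<longrightarrow> \<sigma> s = \<tau> s)"
    by (auto simp: op_one_def split: if_splits)
next
  fix \<sigma> \<tau> \<sigma>' \<tau>' :: "'a site \<Rightarrow> nat"
  assume "\<sigma> \<in> cfgs p" "\<tau> \<in> cfgs p" "\<sigma>' \<in> cfgs p" "\<tau>' \<in> cfgs p" "\<forall>s. s \<notin> {} \<longrightarrow> \<sigma> s = \<tau> s \<and> \<sigma>' s = \<tau>' s"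
  then have "\<sigma> = \<tau>" "\<sigma>' = \<tau>'" by (auto simp: fun_eq_iff)
  then show "op_one p (\<sigma>, \<tau>) = op_one p (\<sigma>', \<tau>')" using \<open>\<sigma> \<in> cfgs p\<close> \<open>\<sigma>' \<in> cfgs p\<close> by (simp add: op_one_def)
qed simp

lemma local_one': "finite S \<Longrightarrow> local_in p S (op_one p)"
  using local_mono[OF local_one] by blast

lemma local_add: assumes X: "local_in p S X" and Y: "local_in p S Y" shows "local_in p S (X + Y)"
proof (rule local_inI)
  show "finite S" using X by (simp add: local_in_def)
next
  fix \<sigma> \<tau> assume "(X + Y) (\<sigma>, \<tau>) \<noteq> 0"
  then have "X (\<sigma>, \<tau>) \<noteq> 0 \<or> Y (\<sigma>, \<tau>) \<noteq> 0" by auto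
  then show "\<sigma> \<in> cfgs p \<and> \<tau> \<in> cfgs p \<and> (\<forall>s. s \<notin> S \<longrightarrow> \<sigma> s = \<tau> s)"
    using local_nz[OF X] local_nz[OF Y] by blast
next
  fix \<sigma> \<tau> \<sigma>' \<tau>'
  assume "\<sigma> \<in> cfgs p" "\<tau> \<in> cfgs p" "\<sigma>' \<in> cfgs p" "\<tau>' \<in> cfgs p"
    "\<forall>s\<in>S. \<sigma> s = \<sigma>' s \<and> \<tau> s = \<tau>' s" "\<forall>s. s \<notin> S \<longrightarrow> \<sigma> s = \<tau> s \<and> \<sigma>' s = \<tau>' s"
  then have "X (\<sigma>, \<tau>) = X (\<sigma>', \<tau>')" "Y (\<sigma>, \<tau>) = Y (\<sigma>', \<tau>')"
    by (intro local_eq[OF X] local_eq[OF Y]; auto)+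
  then show "(X + Y) (\<sigma>, \<tau>) = (X + Y) (\<sigma>', \<tau>')" by simp
qed

lemma local_scale: assumes X: "local_in p S X" shows "local_in p S (fscale k X)"
proof (rule local_inI)
  show "finite S" using X by (simp add: local_in_def)
next
  fix \<sigma> \<tau> assume "fscale k X (\<sigma>, \<tau>) \<noteq> 0"
  then have "X (\<sigma>, \<tau>) \<noteq> 0" by auto
  then show "\<sigma> \<in> cfgs p \<and> \<tau> \<in> cfgs p \<and> (\<forall>s. s \<notin> S \<longrightarrow> \<sigma> s = \<tau> s)"
    using local_nz[OF X] by blast
next
  fix \<sigma> \<tau> \<sigma>' \<tau>'
  assume "\<sigma> \<in> cfgs p" "\<tau> \<in> cfgs p" "\<sigma>' \<in> cfgs p" "\<tau>' \<in> cfgs p"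
    "\<forall>s\<in>S. \<sigma> s = \<sigma>' s \<and> \<tau> s = \<tau>' s" "\<forall>s. s \<notin> S \<longrightarrow> \<sigma> s = \<tau> s \<and> \<sigma>' s = \<tau>' s"
  then have "X (\<sigma>, \<tau>) = X (\<sigma>', \<tau>')"
    by (intro local_eq[OF X]; auto)+
  then show "fscale k X (\<sigma>, \<tau>) = fscale k X (\<sigma>', \<tau>')" by simp
qed

lemma local_uminus: "local_in p S X \<Longrightarrow> local_in p S (- X)"
proof -
  assume "local_in p S X"
  then have "local_in p S (fscale (-1) X)" by (rule local_scale)
  moreover have "fscale (-1) X = - X" by (simp add: fun_eq_iff)
  ultimately show ?thesis by simp
qed

lemma local_diff: "local_in p S X \<Longrightarrow> local_in p S Y \<Longrightarrow> local_in p S (X - Y)"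
  using local_add[OF _ local_uminus] by (metis diff_conv_add_uminus)

lemma local_sum: "finite I \<Longrightarrow> finite S \<Longrightarrow> (\<And>i. i \<in> I \<Longrightarrow> local_in p S (f i)) \<Longrightarrow> local_in p S (\<Sum>i\<in>I. f i)"
  by (induction I rule: finite_induct) (auto simp: local_add local_zero zero_fun_def)

lemma local_star: assumes X: "local_in p S X" shows "local_in p S (op_star X)"
  unfolding op_star_def
proof (rule local_inI)
  show "finite S" using X by (simp add: local_in_def)
next
  fix \<sigma> \<tau> assume "(case (\<sigma>, \<tau>) of (\<sigma>, \<tau>) \<Rightarrow> cnj (X (\<tau>, \<sigma>))) \<noteq> 0"
  then have "X (\<tau>, \<sigma>) \<noteq> 0" by simp
  then show "\<sigma> \<in> cfgs p \<and> \<tau> \<in> cfgs p \<and> (\<forall>s. s \<notin> S \<longrightarrow> \<sigma> s = \<tau> s)"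
    using local_nz[OF X] by metis
next
  fix \<sigma> \<tau> \<sigma>' \<tau>'
  assume "\<sigma> \<in> cfgs p" "\<tau> \<in> cfgs p" "\<sigma>' \<in> cfgs p" "\<tau>' \<in> cfgs p"
    "\<forall>s\<in>S. \<sigma> s = \<sigma>' s \<and> \<tau> s = \<tau>' s" "\<forall>s. s \<notin> S \<longrightarrow> \<sigma> s = \<tau> s \<and> \<sigma>' s = \<tau>' s"
  then have "X (\<tau>, \<sigma>) = X (\<tau>', \<sigma>')" by (intro local_eq[OF X]) auto
  then show "(case (\<sigma>, \<tau>) of (\<sigma>, \<tau>) \<Rightarrow> cnj (X (\<tau>, \<sigma>))) = (case (\<sigma>', \<tau>') of (\<sigma>, \<tau>) \<Rightarrow> cnj (X (\<tau>, \<sigma>)))"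
    by simp
qed


lemma sum_nonzero_ex: "(\<Sum>i\<in>I. f i) \<noteq> (0::complex) \<Longrightarrow> \<exists>i\<in>I. f i \<noteq> 0"
  by (metis sum.neutral)

lemma local_mult:
  assumes X: "local_in p S X" and Y: "local_in p S Y"
  shows "local_in p S (op_mult X Y)"
proof (rule local_inI)
  show "finite S" using X by (simp add: local_in_def)
next
  fix \<sigma> \<tau> assume "op_mult X Y (\<sigma>, \<tau>) \<noteq> 0"
  then obtain \<rho> where "X (\<sigma>, \<rho>) * Y (\<rho>, \<tau>) \<noteq> 0"
    using sum_nonzero_ex unfolding op_mult_row[OF X] by blast
  then have "X (\<sigma>, \<rho>) \<noteq> 0" "Y (\<rho>, \<tau>) \<noteq> 0" by auto
  then show "\<sigma> \<in> cfgs p \<and> \<tau> \<in> cfgs p \<and> (\<forall>s. s \<notin> S \<longrightarrow> \<sigma> s = \<tau> s)"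
    using local_nz[OF X] local_nz[OF Y] by metis
next
  fix \<sigma> \<tau> \<sigma>' \<tau>'
  assume c: "\<sigma> \<in> cfgs p" "\<tau> \<in> cfgs p" "\<sigma>' \<in> cfgs p" "\<tau>' \<in> cfgs p"
  assume ag: "\<forall>s\<in>S. \<sigma> s = \<sigma>' s \<and> \<tau> s = \<tau>' s"
  assume out: "\<forall>s. s \<notin> S \<longrightarrow> \<sigma> s = \<tau> s \<and> \<sigma>' s = \<tau>' s"
  define h where "h = (\<lambda>\<rho>::'a cfg. \<lambda>s. if s \<in> S then \<rho> s else \<sigma>' s)"
  define h' where "h' = (\<lambda>\<rho>::'a cfg. \<lambda>s. if s \<in> S then \<rho> s else \<sigma> s)"
  have "(\<Sum>\<rho>\<in>rowset p S \<sigma>. X (\<sigma>, \<rho>) * Y (\<rho>, \<tau>)) = (\<Sum>\<rho>\<in>rowset p S \<sigma>'. X (\<sigma>', \<rho>) * Y (\<rho>, \<tau>'))"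
  proof (rule sum.reindex_bij_witness[where i=h' and j=h])
    fix \<rho> assume r: "\<rho> \<in> rowset p S \<sigma>'"
    then show "h (h' \<rho>) = \<rho>" by (auto simp: h_def h'_def rowset_def fun_eq_iff)
    show "h' \<rho> \<in> rowset p S \<sigma>" using r c by (auto simp: h'_def rowset_def cfgs_def)
  next
    fix \<rho> assume r: "\<rho> \<in> rowset p S \<sigma>"
    then show "h' (h \<rho>) = \<rho>" by (auto simp: h_def h'_def rowset_def fun_eq_iff)
    have hr: "h \<rho> \<in> cfgs p" using r c by (auto simp: h_def rowset_def cfgs_def)
    then show "h \<rho> \<in> rowset p S \<sigma>'" by (auto simp: h_def rowset_def)
    have r2: "\<rho> \<in> cfgs p" "\<forall>s. s \<notin> S \<longrightarrow> \<rho> s = \<sigma> s" using r by (auto simp: rowset_def)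
    have "X (\<sigma>, \<rho>) = X (\<sigma>', h \<rho>)"
      by (rule local_eq[OF X c(1) r2(1) c(3) hr]) (use ag r2 in \<open>auto simp: h_def\<close>)
    moreover have "Y (\<rho>, \<tau>) = Y (h \<rho>, \<tau>')"
      by (rule local_eq[OF Y r2(1) c(2) hr c(4)]) (use ag out r2 in \<open>auto simp: h_def\<close>)
    ultimately show "X (\<sigma>', h \<rho>) * Y (h \<rho>, \<tau>') = X (\<sigma>, \<rho>) * Y (\<rho>, \<tau>)" by simp
  qed
  then show "op_mult X Y (\<sigma>, \<tau>) = op_mult X Y (\<sigma>', \<tau>')"
    by (simp add: op_mult_row[OF X])
qed

lemma Mat_iff: "X \<in> Mat p \<longleftrightarrow> (\<exists>S. local_in p S X)"
  by (auto simp: Mat_def Mat_loc_def)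

lemma Mat_loc_iff: "X \<in> Mat_loc p S \<longleftrightarrow> local_in p S X"
  by (simp add: Mat_loc_def)

lemma common_support:
  assumes "finite I" "\<And>i. i \<in> I \<Longrightarrow> f i \<in> Mat p"
  shows "\<exists>S. finite S \<and> (\<forall>i\<in>I. local_in p S (f i))"
  using assms
proof (induction I rule: finite_induct)
  case empty then show ?case by auto
next
  case (insert x F)
  then obtain S where S: "finite S" "\<forall>i\<in>F. local_in p S (f i)" by auto
  obtain T where T: "local_in p T (f x)" using insert Mat_iff by blast
  have fT: "finite T" using T local_finite by auto
  show ?case
    using S T fT local_mono[of p S _ "S \<union> T"] local_mono[OF T, of "S \<union> T"]
    by (intro exI[of _ "S \<union> T"]) auto
qed

lemma common_support2:
  assumes "X \<in> Mat p" "Y \<in> Mat p"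
  obtains S where "local_in p S X" "local_in p S Y"
  using common_support[of "{X, Y}" id p] assms that by auto

lemma common_support3:
  assumes "X \<in> Mat p" "Y \<in> Mat p" "Z \<in> Mat p"
  obtains S where "local_in p S X" "local_in p S Y" "local_in p S Z"
  using common_support[of "{X, Y, Z}" id p] assms that by auto

lemma mult_add_left:
  assumes "local_in p S X" "local_in p S X'"
  shows "op_mult (X + X') Y = op_mult X Y + op_mult X' Y"
proof -
  have XX: "local_in p S (X + X')" using assms by (rule local_add)
  show ?thesis
    by (simp add: fun_eq_iff op_mult_row[OF XX] op_mult_row[OF assms(1)] op_mult_row[OF assms(2)]
        sum.distrib algebra_simps)
qed

lemma mult_add_right: "op_mult X (Y + Y') = op_mult X Y + op_mult X Y'"
  by (simp add: fun_eq_iff op_mult_def sum.distrib algebra_simps)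

lemma mult_scale_left: "local_in p S X \<Longrightarrow> op_mult (fscale k X) Y = fscale k (op_mult X Y)"
  using local_scale[of p S X k]
  by (simp add: fun_eq_iff op_mult_row sum_distrib_left algebra_simps)

lemma mult_scale_right: "op_mult X (fscale k Y) = fscale k (op_mult X Y)"
  by (simp add: fun_eq_iff op_mult_def sum_distrib_left algebra_simps)

lemma mult_zero_left: "op_mult 0 Y = 0"
  by (simp add: fun_eq_iff op_mult_def)

lemma mult_zero_right: "op_mult X 0 = 0"
  by (simp add: fun_eq_iff op_mult_def)

lemma mult_diff_right: "op_mult X (Y - Y') = op_mult X Y - op_mult X Y'"
  by (simp add: fun_eq_iff op_mult_def sum_subtractf algebra_simps)

lemma mult_sum_left:
  assumes "finite I" "finite S" "\<And>i. i \<in> I \<Longrightarrow> local_in p S (f i)"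
  shows "op_mult (\<Sum>i\<in>I. f i) Y = (\<Sum>i\<in>I. op_mult (f i) Y)"
  using assms
proof (induction I rule: finite_induct)
  case empty show ?case by (simp only: sum.empty mult_zero_left)
next
  case (insert x F)
  have l: "local_in p S (\<Sum>i\<in>F. f i)" using insert by (intro local_sum) auto
  have lx: "local_in p S (f x)" using insert by auto
  have "op_mult (\<Sum>i\<in>insert x F. f i) Y = op_mult (f x + (\<Sum>i\<in>F. f i)) Y"
    by (simp only: sum.insert[OF insert(1,2)])
  also have "\<dots> = op_mult (f x) Y + op_mult (\<Sum>i\<in>F. f i) Y" by (rule mult_add_left[OF lx l])
  also have "\<dots> = (\<Sum>i\<in>insert x F. op_mult (f i) Y)" using insert by (simp add: sum.insert[OF insert(1,2)])
  finally show ?case .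
qed

lemma mult_sum_right: "op_mult X (\<Sum>i\<in>I. f i) = (\<Sum>i\<in>I. op_mult X (f i))"
proof (induction I rule: infinite_finite_induct)
  case (infinite A) then show ?case by (simp only: sum.infinite[OF infinite] mult_zero_right)
next
  case empty then show ?case by (simp only: sum.empty mult_zero_right)
next
  case (insert x F) then show ?case by (simp only: sum.insert[OF insert(1,2)] mult_add_right)
qed

lemma mult_assoc:
  assumes X: "local_in p S X" and Y: "local_in p S Y"
  shows "op_mult (op_mult X Y) Z = op_mult X (op_mult Y Z)"
proof (rule ext, clarify)
  fix \<sigma> \<tau>
  have XY: "local_in p S (op_mult X Y)" using X Y by (rule local_mult)
  have "op_mult (op_mult X Y) Z (\<sigma>, \<tau>) =
      (\<Sum>\<rho>\<in>rowset p S \<sigma>. (\<Sum>\<mu>\<in>rowset p S \<sigma>. X (\<sigma>, \<mu>) * Y (\<mu>, \<rho>)) * Z (\<rho>, \<tau>))"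
    by (simp add: op_mult_row[OF XY] op_mult_row[OF X])
  also have "\<dots> = (\<Sum>\<rho>\<in>rowset p S \<sigma>. \<Sum>\<mu>\<in>rowset p S \<sigma>. X (\<sigma>, \<mu>) * (Y (\<mu>, \<rho>) * Z (\<rho>, \<tau>)))"
    by (simp add: sum_distrib_right mult.assoc)
  also have "\<dots> = (\<Sum>\<mu>\<in>rowset p S \<sigma>. \<Sum>\<rho>\<in>rowset p S \<sigma>. X (\<sigma>, \<mu>) * (Y (\<mu>, \<rho>) * Z (\<rho>, \<tau>)))"
    by (rule sum.swap)
  also have "\<dots> = (\<Sum>\<mu>\<in>rowset p S \<sigma>. X (\<sigma>, \<mu>) * (\<Sum>\<rho>\<in>rowset p S \<mu>. Y (\<mu>, \<rho>) * Z (\<rho>, \<tau>)))"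
    by (intro sum.cong refl) (simp add: rowset_same sum_distrib_left)
  also have "\<dots> = op_mult X (op_mult Y Z) (\<sigma>, \<tau>)"
    by (simp add: op_mult_row[OF X] op_mult_row[OF Y])
  finally show "op_mult (op_mult X Y) Z (\<sigma>, \<tau>) = op_mult X (op_mult Y Z) (\<sigma>, \<tau>)" .
qed

lemma one_mult: assumes X: "local_in p S X" shows "op_mult (op_one p) X = X"
proof (rule ext, clarify)
  fix \<sigma> \<tau>
  have "op_mult (op_one p) X (\<sigma>, \<tau>) = (\<Sum>\<rho>\<in>{\<sigma>}. op_one p (\<sigma>, \<rho>) * X (\<rho>, \<tau>))"
    by (rule op_mult_sum) (auto simp: op_one_def split: if_splits)
  also have "\<dots> = X (\<sigma>, \<tau>)"
    using local_notcfg[OF X, of \<sigma> \<tau>] by (auto simp: op_one_def)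
  finally show "op_mult (op_one p) X (\<sigma>, \<tau>) = X (\<sigma>, \<tau>)" .
qed

lemma mult_one: assumes X: "local_in p S X" shows "op_mult X (op_one p) = X"
proof (rule ext, clarify)
  fix \<sigma> \<tau>
  have "op_mult X (op_one p) (\<sigma>, \<tau>) = (\<Sum>\<rho>\<in>rowset p S \<sigma>. X (\<sigma>, \<rho>) * op_one p (\<rho>, \<tau>))"
    by (rule op_mult_row[OF X])
  also have "\<dots> = (\<Sum>\<rho>\<in>rowset p S \<sigma>. if \<rho> = \<tau> then X (\<sigma>, \<tau>) else 0)"
    by (intro sum.cong refl) (auto simp: op_one_def rowset_def)
  also have "\<dots> = X (\<sigma>, \<tau>)"
    using local_row[OF X, of \<sigma> \<tau>] finite_rowset[OF local_finite[OF X]]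
    by (auto simp: sum.delta)
  finally show "op_mult X (op_one p) (\<sigma>, \<tau>) = X (\<sigma>, \<tau>)" .
qed

lemma star_star[simp]: "op_star (op_star X) = X"
  by (simp add: op_star_def fun_eq_iff)

lemma star_add: "op_star (X + Y) = op_star X + op_star Y"
  by (simp add: op_star_def fun_eq_iff)

lemma star_diff: "op_star (X - Y) = op_star X - op_star Y"
  by (simp add: op_star_def fun_eq_iff)

lemma star_zero[simp]: "op_star 0 = 0"
  by (simp add: op_star_def fun_eq_iff)

lemma star_scale: "op_star (fscale k X) = fscale (cnj k) (op_star X)"
  by (simp add: op_star_def fun_eq_iff)

lemma star_sum: "op_star (\<Sum>i\<in>I. f i) = (\<Sum>i\<in>I. op_star (f i))"
proof (induction I rule: infinite_finite_induct)
  case (infinite A) then show ?case by (simp only: sum.infinite[OF infinite] star_zero)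
next
  case empty then show ?case by (simp only: sum.empty star_zero)
next
  case (insert x F) then show ?case by (simp only: sum.insert[OF insert(1,2)] star_add)
qed

lemma star_one[simp]: "op_star (op_one p) = op_one p"
proof (rule ext, clarify)
  fix \<sigma> \<tau> show "op_star (op_one p) (\<sigma>, \<tau>) = op_one p (\<sigma>, \<tau>)"
    by (cases "\<sigma> = \<tau>") (auto simp: op_star_def op_one_def)
qed

lemma star_mult:
  assumes X: "local_in p S X" and Y: "local_in p S Y"
  shows "op_star (op_mult X Y) = op_mult (op_star Y) (op_star X)"
proof (rule ext, clarify)
  fix \<sigma> \<tau>
  have Ys: "local_in p S (op_star Y)" using Y by (rule local_star)
  have fS: "finite S" using X local_finite by auto
  let ?U = "rowset p S \<sigma> \<union> rowset p S \<tau>"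
  have fU: "finite ?U" using fS finite_rowset by auto
  have "op_mult X Y (\<tau>, \<sigma>) = (\<Sum>\<rho>\<in>?U. X (\<tau>, \<rho>) * Y (\<rho>, \<sigma>))"
    by (rule op_mult_sum[OF fU]) (use local_row[OF X] in blast)
  then have "op_star (op_mult X Y) (\<sigma>, \<tau>) = cnj (\<Sum>\<rho>\<in>?U. X (\<tau>, \<rho>) * Y (\<rho>, \<sigma>))"
    by (simp add: op_star_def)
  also have "\<dots> = (\<Sum>\<rho>\<in>?U. op_star Y (\<sigma>, \<rho>) * op_star X (\<rho>, \<tau>))"
    by (simp add: op_star_def mult.commute)
  also have "\<dots> = op_mult (op_star Y) (op_star X) (\<sigma>, \<tau>)"
    by (rule op_mult_sum[OF fU, symmetric]) (use local_row[OF Ys] in blast)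
  finally show "op_star (op_mult X Y) (\<sigma>, \<tau>) = op_mult (op_star Y) (op_star X) (\<sigma>, \<tau>)" .
qed

lemma local_inter:
  assumes S: "local_in p S X" and T: "local_in p T X"
  shows "local_in p (S \<inter> T) X"
proof (rule local_inI)
  show "finite (S \<inter> T)" using S local_finite by auto
next
  fix \<sigma> \<tau> assume "X (\<sigma>, \<tau>) \<noteq> 0"
  then show "\<sigma> \<in> cfgs p \<and> \<tau> \<in> cfgs p \<and> (\<forall>s. s \<notin> S \<inter> T \<longrightarrow> \<sigma> s = \<tau> s)"
    using local_nz[OF S] local_nz[OF T] by blast
next
  fix \<sigma> \<tau> \<sigma>' \<tau>'
  assume c: "\<sigma> \<in> cfgs p" "\<tau> \<in> cfgs p" "\<sigma>' \<in> cfgs p" "\<tau>' \<in> cfgs p"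
  assume ag: "\<forall>s\<in>S \<inter> T. \<sigma> s = \<sigma>' s \<and> \<tau> s = \<tau>' s"
  assume out: "\<forall>s. s \<notin> S \<inter> T \<longrightarrow> \<sigma> s = \<tau> s \<and> \<sigma>' s = \<tau>' s"
  define \<mu> where "\<mu> = (\<lambda>s. if s \<in> T then \<sigma> s else \<sigma>' s)"
  define \<nu> where "\<nu> = (\<lambda>s. if s \<in> T then \<tau> s else \<tau>' s)"
  have cm: "\<mu> \<in> cfgs p" "\<nu> \<in> cfgs p" using c by (auto simp: \<mu>_def \<nu>_def cfgs_def)
  have "X (\<sigma>, \<tau>) = X (\<mu>, \<nu>)"
    by (rule local_eq[OF T c(1,2) cm]) (use out in \<open>auto simp: \<mu>_def \<nu>_def\<close>)
  also have "\<dots> = X (\<sigma>', \<tau>')"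
    by (rule local_eq[OF S cm c(3,4)]) (use out ag in \<open>auto simp: \<mu>_def \<nu>_def\<close>)
  finally show "X (\<sigma>, \<tau>) = X (\<sigma>', \<tau>')" .
qed

lemma Supp_spec:
  assumes "X \<in> Mat p"
  shows "local_in p (Supp p X) X \<and> (\<forall>T. local_in p T X \<longrightarrow> Supp p X \<subseteq> T)"
proof -
  obtain S0 where S0: "local_in p S0 X" using assms Mat_iff by blast
  define n where "n = (LEAST n. \<exists>S. local_in p S X \<and> card S = n)"
  have "\<exists>S. local_in p S X \<and> card S = n"
    unfolding n_def by (rule LeastI[of _ "card S0"]) (use S0 in blast)
  then obtain S where S: "local_in p S X" "card S = n" by blast
  have min: "card S \<le> card S'" if "local_in p S' X" for S'
    unfolding S(2) n_def by (rule Least_le) (use that in blast)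
  have sub: "S \<subseteq> T" if T: "local_in p T X" for T
  proof -
    have I: "local_in p (S \<inter> T) X" by (rule local_inter[OF S(1) T])
    have "card S \<le> card (S \<inter> T)" by (rule min[OF I])
    moreover have "finite S" using S(1) local_finite by auto
    ultimately have "S \<inter> T = S"
      by (metis card_subset_eq inf_le1 le_antisym card_mono)
    then show ?thesis by blast
  qed
  have P: "local_in p S X \<and> (\<forall>T. local_in p T X \<longrightarrow> S \<subseteq> T)" using S sub by blast
  have "Supp p X = S"
    unfolding Supp_def
  proof (rule the_equality)
    show "local_in p S X \<and> (\<forall>T. local_in p T X \<longrightarrow> S \<subseteq> T)" by (rule P)
    fix S' assume "local_in p S' X \<and> (\<forall>T. local_in p T X \<longrightarrow> S' \<subseteq> T)"
    then show "S' = S" using P by blast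
  qed
  then show ?thesis using P by simp
qed

lemma linf_le:
  fixes s t :: "'d::finite site"
  assumes "linf_dist s t \<le> int l"
  shows "\<bar>s $ i - t $ i\<bar> \<le> int l"
proof -
  have "\<bar>s $ i - t $ i\<bar> \<le> linf_dist s t"
    unfolding linf_dist_def by (rule Max_ge) auto
  then show ?thesis using assms by simp
qed

lemma linf_self: "linf_dist (s::'d::finite site) s = 0"
proof -
  have "range (\<lambda>i. \<bar>s $ i - s $ i\<bar>) = {0}" by auto
  then show ?thesis by (simp add: linf_dist_def)
qed

lemma self_thicken: "s \<in> thicken {s::'d::finite site} l"
  by (simp add: thicken_def linf_self)

lemma sub_thicken: "S \<subseteq> thicken (S::'d::finite site set) l"
  by (auto simp: thicken_def intro!: bexI[where x=s for s] simp: linf_self)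

lemma thicken_mono1: "s \<in> S \<Longrightarrow> thicken {s} l \<subseteq> thicken (S::'d::finite site set) l"
  by (auto simp: thicken_def)

lemma finite_thicken1: "finite (thicken {s::'d::finite site} l)"
proof -
  have "thicken {s} l \<subseteq> (\<lambda>f. \<chi> i. f i) ` (PiE UNIV (\<lambda>i. {s $ i - int l .. s $ i + int l}))"
  proof
    fix t assume "t \<in> thicken {s} l"
    then have d: "linf_dist s t \<le> int l" by (simp add: thicken_def)
    have "(\<lambda>i. t $ i) \<in> PiE UNIV (\<lambda>i. {s $ i - int l .. s $ i + int l})"
      using linf_le[OF d] by (auto simp: abs_le_iff) (smt (verit))+
    moreover have "t = (\<chi> i. (\<lambda>i. t $ i) i)" by simp
    ultimately show "t \<in> (\<lambda>f. \<chi> i. f i) ` (PiE UNIV (\<lambda>i. {s $ i - int l .. s $ i + int l}))"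
      by blast
  qed
  moreover have "finite (PiE (UNIV::'d set) (\<lambda>i. {s $ i - int l .. s $ i + int l}))"
    by (intro finite_PiE) auto
  ultimately show ?thesis by (meson finite_surj)
qed

lemma finite_thicken: "finite S \<Longrightarrow> finite (thicken (S::'d::finite site set) l)"
proof -
  assume "finite S"
  moreover have "thicken S l = (\<Union>s\<in>S. thicken {s} l)" by (auto simp: thicken_def)
  ultimately show ?thesis using finite_thicken1 by auto
qed

locale VSset =
  fixes p :: "'d::finite site \<Rightarrow> nat" and A B :: "'d op set"
  assumes ppos: "\<forall>s. 0 < p s"
    and sub: "unital_star_subalg p A"
    and vs: "VS p A"
    and Bdef: "B = commutant p A"
begin

lemma A_Mat: "a \<in> A \<Longrightarrow> a \<in> Mat p" using sub by (auto simp: unital_star_subalg_def)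
lemma A_one: "op_one p \<in> A" using sub by (auto simp: unital_star_subalg_def)
lemma A_add: "a \<in> A \<Longrightarrow> b \<in> A \<Longrightarrow> a + b \<in> A"
  using sub by (auto simp: unital_star_subalg_def fadd_eq)
lemma A_mult: "a \<in> A \<Longrightarrow> b \<in> A \<Longrightarrow> op_mult a b \<in> A"
  using sub by (auto simp: unital_star_subalg_def)
lemma A_scale: "a \<in> A \<Longrightarrow> fscale k a \<in> A"
  using sub by (auto simp: unital_star_subalg_def)
lemma A_star: "a \<in> A \<Longrightarrow> op_star a \<in> A"
  using sub by (auto simp: unital_star_subalg_def)
lemma A_zero: "0 \<in> A"
proof -
  have "fscale 0 (op_one p) = 0" by (simp add: fun_eq_iff)
  then show ?thesis using A_scale[OF A_one, of 0] by simp
qed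
lemma A_subspace: "fv.subspace A"
  unfolding fv.subspace_def using A_zero A_add A_scale by blast
lemma A_diff: "a \<in> A \<Longrightarrow> b \<in> A \<Longrightarrow> a - b \<in> A"
  using A_subspace fv.subspace_diff by blast
lemma A_sum: "(\<And>i. i \<in> I \<Longrightarrow> f i \<in> A) \<Longrightarrow> (\<Sum>i\<in>I. f i) \<in> A"
  using A_subspace fv.subspace_sum by blast

lemma B_Mat: "b \<in> B \<Longrightarrow> b \<in> Mat p" using Bdef by (auto simp: commutant_def)
lemma B_comm: "a \<in> A \<Longrightarrow> b \<in> B \<Longrightarrow> op_mult a b = op_mult b a"
  using Bdef by (auto simp: commutant_def)
lemma B_I: "b \<in> Mat p \<Longrightarrow> (\<And>a. a \<in> A \<Longrightarrow> op_mult a b = op_mult b a) \<Longrightarrow> b \<in> B"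
  using Bdef by (auto simp: commutant_def)

lemma B_zero: "0 \<in> B"
proof (rule B_I)
  have "local_in p {} (0::'d op)" using local_zero[of "{}" p] by (simp add: zero_fun_def)
  then show "0 \<in> Mat p" using Mat_iff by blast
qed (simp add: mult_zero_left mult_zero_right)

lemma B_add: assumes "b \<in> B" "b' \<in> B" shows "b + b' \<in> B"
proof (rule B_I)
  obtain S where "local_in p S b" "local_in p S b'" using assms B_Mat common_support2 by metis
  then show "b + b' \<in> Mat p" using local_add Mat_iff by blast
  fix a assume a: "a \<in> A"
  obtain S where S: "local_in p S b" "local_in p S b'" using assms B_Mat common_support2 by metis
  show "op_mult a (b + b') = op_mult (b + b') a"
    using B_comm[OF a assms(1)] B_comm[OF a assms(2)]
    by (simp add: mult_add_right mult_add_left[OF S])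
qed

lemma B_scale: assumes "b \<in> B" shows "fscale k b \<in> B"
proof (rule B_I)
  obtain S where S: "local_in p S b" using assms B_Mat Mat_iff by blast
  then show "fscale k b \<in> Mat p" using local_scale Mat_iff by blast
  fix a assume a: "a \<in> A"
  show "op_mult a (fscale k b) = op_mult (fscale k b) a"
    using B_comm[OF a assms(1)] by (simp add: mult_scale_right mult_scale_left[OF S])
qed

lemma B_subspace: "fv.subspace B"
  unfolding fv.subspace_def using B_zero B_add B_scale by blast
lemma B_sum: "(\<And>i. i \<in> I \<Longrightarrow> f i \<in> B) \<Longrightarrow> (\<Sum>i\<in>I. f i) \<in> B"
  using B_subspace fv.subspace_sum by blast

lemma B_mult: assumes b: "b \<in> B" and b': "b' \<in> B" shows "op_mult b b' \<in> B"
proof (rule B_I)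
  obtain S where S: "local_in p S b" "local_in p S b'" using assms B_Mat common_support2 by metis
  then show "op_mult b b' \<in> Mat p" using local_mult Mat_iff by blast
  fix a assume a: "a \<in> A"
  obtain U where U: "local_in p U a" "local_in p U b" "local_in p U b'"
    using A_Mat[OF a] B_Mat[OF b] B_Mat[OF b'] common_support3 by metis
  have "op_mult a (op_mult b b') = op_mult (op_mult a b) b'" using U by (simp add: mult_assoc)
  also have "\<dots> = op_mult (op_mult b a) b'" using B_comm[OF a b] by simp
  also have "\<dots> = op_mult b (op_mult a b')" using U by (simp add: mult_assoc)
  also have "\<dots> = op_mult b (op_mult b' a)" using B_comm[OF a b'] by simp
  also have "\<dots> = op_mult (op_mult b b') a" using U by (simp add: mult_assoc)
  finally show "op_mult a (op_mult b b') = op_mult (op_mult b b') a" .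
qed

lemma B_star: assumes b: "b \<in> B" shows "op_star b \<in> B"
proof (rule B_I)
  obtain S where S: "local_in p S b" using assms B_Mat Mat_iff by blast
  then show "op_star b \<in> Mat p" using local_star Mat_iff by blast
  fix a assume a: "a \<in> A"
  obtain U where U: "local_in p U a" "local_in p U b"
    using A_Mat[OF a] B_Mat[OF b] common_support2 by metis
  have Us: "local_in p U (op_star a)" "local_in p U (op_star b)" using U local_star by auto
  have "op_mult a (op_star b) = op_star (op_mult b (op_star a))"
    using star_mult[OF U(2) Us(1)] by simp
  also have "\<dots> = op_star (op_mult (op_star a) b)" using B_comm[OF A_star[OF a] b] by simp
  also have "\<dots> = op_mult (op_star b) a" using star_mult[OF Us(1) U(2)] by simp
  finally show "op_mult a (op_star b) = op_mult (op_star b) a" .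
qed

lemma B_one: "op_one p \<in> B"
proof (rule B_I)
  show "op_one p \<in> Mat p" using local_one Mat_iff by blast
  fix a assume a: "a \<in> A"
  obtain S where S: "local_in p S a" using A_Mat[OF a] Mat_iff by blast
  show "op_mult a (op_one p) = op_mult (op_one p) a" using one_mult[OF S] mult_one[OF S] by simp
qed

end

declare plus_fun_apply[simp del] zero_fun_apply[simp del] fscale_apply[simp del]
lemmas fun_simps = plus_fun_apply zero_fun_apply fscale_apply minus_apply uminus_apply

definition omega :: "('d site \<Rightarrow> nat) \<Rightarrow> 'd site set \<Rightarrow> 'd cfg set" where
  "omega p T = rowset p T (\<lambda>_. 0)"

definition ip :: "('d site \<Rightarrow> nat) \<Rightarrow> 'd site set \<Rightarrow> 'd op \<Rightarrow> 'd op \<Rightarrow> complex" where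
  "ip p T X Y = (\<Sum>\<sigma>\<in>omega p T. \<Sum>\<tau>\<in>omega p T. X (\<sigma>, \<tau>) * cnj (Y (\<sigma>, \<tau>)))"

lemma finite_omega: "finite T \<Longrightarrow> finite (omega p T)"
  by (simp add: omega_def finite_rowset)

lemma omega_rowset: "\<sigma> \<in> omega p T \<Longrightarrow> rowset p T \<sigma> = omega p T"
  by (simp add: omega_def rowset_same)

lemma ip_add_left: "ip p T (X + Y) Z = ip p T X Z + ip p T Y Z"
  by (simp add: ip_def plus_fun_apply sum.distrib distrib_right)
lemma ip_diff_left: "ip p T (X - Y) Z = ip p T X Z - ip p T Y Z"
  by (simp add: ip_def sum_subtractf left_diff_distrib)
lemma ip_scale_left: "ip p T (fscale k X) Z = k * ip p T X Z"
  by (simp add: ip_def fscale_apply sum_distrib_left mult.assoc)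
lemma ip_zero_left: "ip p T 0 Z = 0"
  by (simp add: ip_def zero_fun_apply)
lemma ip_add_right: "ip p T X (Y + Z) = ip p T X Y + ip p T X Z"
  by (simp add: ip_def plus_fun_apply sum.distrib distrib_left)
lemma ip_diff_right: "ip p T X (Y - Z) = ip p T X Y - ip p T X Z"
  by (simp add: ip_def sum_subtractf right_diff_distrib)
lemma ip_scale_right: "ip p T X (fscale k Y) = cnj k * ip p T X Y"
  by (simp add: ip_def fscale_apply sum_distrib_left mult_ac)
lemma ip_zero_right: "ip p T X 0 = 0"
  by (simp add: ip_def zero_fun_apply)
lemma ip_sum_left: "ip p T (\<Sum>i\<in>I. f i) Y = (\<Sum>i\<in>I. ip p T (f i) Y)"
  by (simp add: ip_def fsum_apply sum_distrib_right) (subst sum.swap, rule sum.cong, simp, rule sum.swap)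
lemma ip_cnj: "ip p T Y X = cnj (ip p T X Y)"
  by (simp add: ip_def mult.commute)

lemma ip_mult_left:
  assumes a: "local_in p T a"
  shows "ip p T (op_mult a X) Y = ip p T X (op_mult (op_star a) Y)"
proof -
  let ?O = "omega p T"
  have L: "op_mult a X (\<sigma>, \<tau>) = (\<Sum>\<rho>\<in>?O. a (\<sigma>, \<rho>) * X (\<rho>, \<tau>))" if "\<sigma> \<in> ?O" for \<sigma> \<tau>
    using op_mult_row[OF a] omega_rowset[OF that] by simp
  have as: "local_in p T (op_star a)" using a by (rule local_star)
  have R: "op_mult (op_star a) Y (\<rho>, \<tau>) = (\<Sum>\<sigma>\<in>?O. cnj (a (\<sigma>, \<rho>)) * Y (\<sigma>, \<tau>))" if "\<rho> \<in> ?O" for \<rho> \<tau>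
    using op_mult_row[OF as] omega_rowset[OF that] by (simp add: op_star_def)
  have "ip p T (op_mult a X) Y = (\<Sum>\<sigma>\<in>?O. \<Sum>\<tau>\<in>?O. \<Sum>\<rho>\<in>?O. a (\<sigma>, \<rho>) * X (\<rho>, \<tau>) * cnj (Y (\<sigma>, \<tau>)))"
    unfolding ip_def by (intro sum.cong refl) (simp add: L sum_distrib_right)
  also have "\<dots> = (\<Sum>\<sigma>\<in>?O. \<Sum>\<rho>\<in>?O. \<Sum>\<tau>\<in>?O. a (\<sigma>, \<rho>) * X (\<rho>, \<tau>) * cnj (Y (\<sigma>, \<tau>)))"
    by (rule sum.cong[OF refl], rule sum.swap)
  also have "\<dots> = (\<Sum>\<rho>\<in>?O. \<Sum>\<sigma>\<in>?O. \<Sum>\<tau>\<in>?O. a (\<sigma>, \<rho>) * X (\<rho>, \<tau>) * cnj (Y (\<sigma>, \<tau>)))"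
    by (rule sum.swap)
  also have "\<dots> = (\<Sum>\<rho>\<in>?O. \<Sum>\<tau>\<in>?O. \<Sum>\<sigma>\<in>?O. a (\<sigma>, \<rho>) * X (\<rho>, \<tau>) * cnj (Y (\<sigma>, \<tau>)))"
    by (rule sum.cong[OF refl], rule sum.swap)
  also have "\<dots> = ip p T X (op_mult (op_star a) Y)"
    unfolding ip_def by (intro sum.cong refl) (simp add: R sum_distrib_left mult_ac)
  finally show ?thesis .
qed

lemma ip_mult_right:
  assumes X: "local_in p T X" and Y: "local_in p T Y"
  shows "ip p T (op_mult X a) Y = ip p T X (op_mult Y (op_star a))"
proof -
  let ?O = "omega p T"
  have L: "op_mult X a (\<sigma>, \<tau>) = (\<Sum>\<rho>\<in>?O. X (\<sigma>, \<rho>) * a (\<rho>, \<tau>))" if "\<sigma> \<in> ?O" for \<sigma> \<tau>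
    using op_mult_row[OF X] omega_rowset[OF that] by simp
  have R: "op_mult Y (op_star a) (\<sigma>, \<rho>) = (\<Sum>\<tau>\<in>?O. Y (\<sigma>, \<tau>) * cnj (a (\<rho>, \<tau>)))" if "\<sigma> \<in> ?O" for \<sigma> \<rho>
    using op_mult_row[OF Y] omega_rowset[OF that] by (simp add: op_star_def)
  have "ip p T (op_mult X a) Y = (\<Sum>\<sigma>\<in>?O. \<Sum>\<tau>\<in>?O. \<Sum>\<rho>\<in>?O. X (\<sigma>, \<rho>) * a (\<rho>, \<tau>) * cnj (Y (\<sigma>, \<tau>)))"
    unfolding ip_def by (intro sum.cong refl) (simp add: L sum_distrib_right)
  also have "\<dots> = (\<Sum>\<sigma>\<in>?O. \<Sum>\<rho>\<in>?O. \<Sum>\<tau>\<in>?O. X (\<sigma>, \<rho>) * a (\<rho>, \<tau>) * cnj (Y (\<sigma>, \<tau>)))"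
    by (rule sum.cong[OF refl], rule sum.swap)
  also have "\<dots> = ip p T X (op_mult Y (op_star a))"
    unfolding ip_def by (intro sum.cong refl) (simp add: R sum_distrib_left mult_ac)
  finally show ?thesis .
qed

lemma zero_ext_cfg:
  assumes "\<forall>s. 0 < p s" "\<sigma> \<in> cfgs p"
  shows "(\<lambda>s. if s \<in> T then \<sigma> s else 0) \<in> omega p T"
  using assms by (auto simp: omega_def rowset_def cfgs_def)

lemma ip_pos:
  assumes pp: "\<forall>s. 0 < p s" and X: "local_in p T X" and z: "ip p T X X = 0"
  shows "X = 0"
proof -
  let ?O = "omega p T"
  have fO: "finite ?O" using X local_finite finite_omega by blast
  have "ip p T X X = (\<Sum>\<sigma>\<in>?O. \<Sum>\<tau>\<in>?O. of_real ((norm (X (\<sigma>, \<tau>)))\<^sup>2))"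
    unfolding ip_def by (simp only: complex_norm_square)
  also have "\<dots> = of_real (\<Sum>\<sigma>\<in>?O. \<Sum>\<tau>\<in>?O. (norm (X (\<sigma>, \<tau>)))\<^sup>2)"
    by simp
  finally have "ip p T X X = of_real (\<Sum>\<sigma>\<in>?O. \<Sum>\<tau>\<in>?O. (norm (X (\<sigma>, \<tau>)))\<^sup>2)" .
  then have "(\<Sum>\<sigma>\<in>?O. \<Sum>\<tau>\<in>?O. (norm (X (\<sigma>, \<tau>)))\<^sup>2) = 0" using z by (metis of_real_eq_0_iff)
  then have Z: "X (\<sigma>, \<tau>) = 0" if "\<sigma> \<in> ?O" "\<tau> \<in> ?O" for \<sigma> \<tau>
    using that fO by (simp add: sum_nonneg_eq_0_iff sum_nonneg)
  show ?thesis
  proof (rule ext, clarify)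
    fix \<sigma> \<tau>
    show "X (\<sigma>, \<tau>) = 0 (\<sigma>, \<tau>)"
    proof (rule ccontr)
      assume "X (\<sigma>, \<tau>) \<noteq> 0 (\<sigma>, \<tau>)"
      then have nz: "X (\<sigma>, \<tau>) \<noteq> 0" by (simp add: zero_fun_apply)
      note h = local_nz[OF X nz]
      let ?s0 = "(\<lambda>s. if s \<in> T then \<sigma> s else 0)" and ?t0 = "(\<lambda>s. if s \<in> T then \<tau> s else 0)"
      have o: "?s0 \<in> ?O" "?t0 \<in> ?O" using zero_ext_cfg[OF pp] h by auto
      then have c: "?s0 \<in> cfgs p" "?t0 \<in> cfgs p" by (auto simp: omega_def rowset_def)
      have "X (\<sigma>, \<tau>) = X (?s0, ?t0)"
        by (rule local_eq[OF X]) (use h c in auto)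
      then show False using Z[OF o] nz by simp
    qed
  qed
qed

lemma MT_subspace: "finite T \<Longrightarrow> fv.subspace (Mat_loc p T)"
  unfolding fv.subspace_def
proof (intro conjI ballI allI)
  assume "finite T"
  then show "0 \<in> Mat_loc p T" using local_zero[of T p] by (simp add: Mat_loc_iff zero_fun_def)
next
  fix x y assume "x \<in> Mat_loc p T" "y \<in> Mat_loc p T"
  then show "x + y \<in> Mat_loc p T" using local_add by (auto simp: Mat_loc_iff)
next
  fix c x assume "x \<in> Mat_loc p T"
  then show "fscale c x \<in> Mat_loc p T" using local_scale by (auto simp: Mat_loc_iff)
qed

lemma ortho_span:
  assumes "\<forall>e\<in>E. ip p T z e = 0" "w \<in> fv.span E"
  shows "ip p T z w = 0"
  using assms(2)
proof (induction rule: fv.span_induct_alt)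
  case base then show ?case by (simp add: ip_zero_right)
next
  case (step c x y) then show ?case using assms(1) by (simp add: ip_add_right ip_scale_right)
qed

lemma proj_exists:
  assumes pp: "\<forall>s. 0 < p s" and fT: "finite T" and fE: "finite E" and E: "E \<subseteq> Mat_loc p T"
  shows "\<forall>x. local_in p T x \<longrightarrow> (\<exists>y\<in>fv.span E. \<forall>e\<in>E. ip p T (x - y) e = 0)"
  using fE E
proof (induction E rule: finite_induct)
  case empty
  then show ?case by (auto intro!: bexI[of _ 0] fv.span_zero)
next
  case (insert e E)
  have sub: "fv.span (insert e E) \<subseteq> Mat_loc p T"
    using insert(4) by (intro fv.span_minimal MT_subspace fT)
  have subE: "fv.span E \<subseteq> Mat_loc p T"
    using insert(4) by (intro fv.span_minimal MT_subspace fT) auto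
  have le: "local_in p T e" using insert(4) by (auto simp: Mat_loc_iff)
  obtain ye where ye: "ye \<in> fv.span E" "\<forall>f\<in>E. ip p T (e - ye) f = 0" using insert le by blast
  show ?case
  proof (intro allI impI)
    fix x assume lx: "local_in p T x"
    obtain y where y: "y \<in> fv.span E" "\<forall>f\<in>E. ip p T (x - y) f = 0" using insert lx by blast
    have yspan: "y \<in> fv.span (insert e E)" using y(1) fv.span_mono[of E "insert e E"] by blast
    define e' where "e' = e - ye"
    have e'span: "e' \<in> fv.span (insert e E)"
    proof -
      have "ye \<in> fv.span (insert e E)" using ye(1) fv.span_mono[of E "insert e E"] by blast
      moreover have "e \<in> fv.span (insert e E)" by (rule fv.span_base) simp
      ultimately show ?thesis unfolding e'_def by (rule fv.span_diff[rotated])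
    qed
    have le': "local_in p T e'" using e'span sub by (auto simp: Mat_loc_iff)
    have xy_ye: "ip p T (x - y) ye = 0" by (rule ortho_span[OF y(2) ye(1)])
    have e'_ye: "ip p T e' ye = 0" unfolding e'_def by (rule ortho_span[OF ye(2) ye(1)])
    have xy_e: "ip p T (x - y) e = ip p T (x - y) e'"
      using xy_ye by (simp add: e'_def ip_diff_right)
    have e'_e: "ip p T e' e = ip p T e' e'"
      using e'_ye by (simp add: e'_def ip_diff_right)
    show "\<exists>y\<in>fv.span (insert e E). \<forall>f\<in>insert e E. ip p T (x - y) f = 0"
    proof (cases "ip p T e' e' = 0")
      case True
      then have "e' = 0" by (rule ip_pos[OF pp le', rotated])
      then have "ip p T (x - y) e = 0" using xy_e by (simp add: ip_zero_right)
      then show ?thesis using y yspan by auto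
    next
      case False
      define lam where "lam = ip p T (x - y) e' / ip p T e' e'"
      define y' where "y' = y + fscale lam e'"
      have "y' \<in> fv.span (insert e E)" unfolding y'_def
        using yspan e'span by (intro fv.span_add fv.span_scale)
      moreover have "ip p T (x - y') f = 0" if "f \<in> E" for f
      proof -
        have "ip p T e' f = 0" using ye(2) that by (simp add: e'_def)
        then show ?thesis using y(2) that
          by (simp add: y'_def diff_add_eq_diff_diff_swap ip_diff_left ip_scale_left)
      qed
      moreover have "ip p T (x - y') e = 0"
      proof -
        have "ip p T (x - y') e = ip p T (x - y) e - lam * ip p T e' e"
          by (simp add: y'_def diff_add_eq_diff_diff_swap ip_diff_left ip_scale_left)
        also have "\<dots> = 0" using False by (simp add: xy_e e'_e lam_def)
        finally show ?thesis .
      qed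
      ultimately show ?thesis by blast
    qed
  qed
qed

lemma sum_single:
  assumes "finite F" "\<mu> \<in> F" "\<And>m. m \<in> F \<Longrightarrow> m \<noteq> \<mu> \<Longrightarrow> f m = 0"
  shows "sum f F = (f \<mu> :: complex)"
proof -
  have "sum f F = f \<mu> + sum f (F - {\<mu>})" using assms by (simp add: sum.remove)
  also have "sum f (F - {\<mu>}) = 0" using assms by (intro sum.neutral) auto
  finally show ?thesis by simp
qed

definition munit :: "('d site \<Rightarrow> nat) \<Rightarrow> 'd site set \<Rightarrow> 'd cfg \<Rightarrow> 'd cfg \<Rightarrow> 'd op" where
  "munit p T \<rho> \<rho>' = (\<lambda>(\<sigma>, \<tau>). if \<sigma> \<in> cfgs p \<and> \<tau> \<in> cfgs p \<and> (\<forall>s\<in>T. \<sigma> s = \<rho> s \<and> \<tau> s = \<rho>' s) \<and>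
      (\<forall>s. s \<notin> T \<longrightarrow> \<sigma> s = \<tau> s) then 1 else 0)"

lemma munit_local: "finite T \<Longrightarrow> local_in p T (munit p T \<rho> \<rho>')"
proof (rule local_inI)
  fix \<sigma> \<tau> assume "munit p T \<rho> \<rho>' (\<sigma>, \<tau>) \<noteq> 0"
  then show "\<sigma> \<in> cfgs p \<and> \<tau> \<in> cfgs p \<and> (\<forall>s. s \<notin> T \<longrightarrow> \<sigma> s = \<tau> s)"
    by (auto simp: munit_def split: if_splits)
next
  fix \<sigma> \<tau> \<sigma>' \<tau>'
  assume "\<sigma> \<in> cfgs p" "\<tau> \<in> cfgs p" "\<sigma>' \<in> cfgs p" "\<tau>' \<in> cfgs p"
    "\<forall>s\<in>T. \<sigma> s = \<sigma>' s \<and> \<tau> s = \<tau>' s" "\<forall>s. s \<notin> T \<longrightarrow> \<sigma> s = \<tau> s \<and> \<sigma>' s = \<tau>' s"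
  then show "munit p T \<rho> \<rho>' (\<sigma>, \<tau>) = munit p T \<rho> \<rho>' (\<sigma>', \<tau>')"
    by (simp add: munit_def)
qed

lemma omega_iff: "\<rho> \<in> omega p T \<longleftrightarrow> \<rho> \<in> cfgs p \<and> (\<forall>s. s \<notin> T \<longrightarrow> \<rho> s = 0)"
  by (simp add: omega_def rowset_def)

lemma munit_expand:
  assumes pp: "\<forall>s. 0 < p s" and X: "local_in p T X"
  shows "X = (\<Sum>q\<in>omega p T \<times> omega p T. fscale (X q) (munit p T (fst q) (snd q)))"
proof (rule ext, clarify)
  fix \<sigma> \<tau>
  have fT: "finite T" using X local_finite by auto
  let ?Q = "omega p T \<times> omega p T"
  have fQ: "finite ?Q" using finite_omega[OF fT] by simp
  have R: "(\<Sum>q\<in>?Q. fscale (X q) (munit p T (fst q) (snd q))) (\<sigma>, \<tau>) =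
      (\<Sum>q\<in>?Q. X q * munit p T (fst q) (snd q) (\<sigma>, \<tau>))"
    by (simp add: fsum_apply fscale_apply)
  show "X (\<sigma>, \<tau>) = (\<Sum>q\<in>?Q. fscale (X q) (munit p T (fst q) (snd q))) (\<sigma>, \<tau>)"
  proof (cases "\<sigma> \<in> cfgs p \<and> \<tau> \<in> cfgs p \<and> (\<forall>s. s \<notin> T \<longrightarrow> \<sigma> s = \<tau> s)")
    case True
    define s0 where "s0 = (\<lambda>s. if s \<in> T then \<sigma> s else 0)"
    define t0 where "t0 = (\<lambda>s. if s \<in> T then \<tau> s else 0)"
    have o: "s0 \<in> omega p T" "t0 \<in> omega p T" using zero_ext_cfg[OF pp] True by (auto simp: s0_def t0_def)
    have "(\<Sum>q\<in>?Q. X q * munit p T (fst q) (snd q) (\<sigma>, \<tau>)) = X (s0, t0) * munit p T (fst (s0, t0)) (snd (s0, t0)) (\<sigma>, \<tau>)"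
    proof (rule sum_single[OF fQ, of "(s0, t0)"])
      show "(s0, t0) \<in> ?Q" using o by simp
      fix q assume q: "q \<in> ?Q" "q \<noteq> (s0, t0)"
      obtain a b where qab: "q = (a, b)" by (cases q)
      have ab: "a \<in> omega p T \<and> b \<in> omega p T" "a = s0 \<longrightarrow> b \<noteq> t0" using q qab by auto
      have "\<not> (\<forall>s\<in>T. \<sigma> s = a s \<and> \<tau> s = b s)"
      proof
        assume "\<forall>s\<in>T. \<sigma> s = a s \<and> \<tau> s = b s"
        then have "a = s0" "b = t0" using ab(1) by (auto simp: s0_def t0_def omega_iff fun_eq_iff)
        then show False using ab(2) by simp
      qed
      then have "munit p T a b (\<sigma>, \<tau>) = 0" unfolding munit_def by auto
      then show "X q * munit p T (fst q) (snd q) (\<sigma>, \<tau>) = 0" by (simp add: qab)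
    qed
    also have "\<dots> = X (s0, t0)" using True by (simp add: munit_def s0_def t0_def)
    also have "\<dots> = X (\<sigma>, \<tau>)"
      using o True by (intro local_eq[OF X]) (auto simp: omega_iff s0_def t0_def)
    finally show ?thesis using R by simp
  next
    case False
    then have "X (\<sigma>, \<tau>) = 0" using local_nz[OF X] by blast
    moreover have "munit p T (fst q) (snd q) (\<sigma>, \<tau>) = 0" for q using False by (simp add: munit_def)
    ultimately show ?thesis using R by simp
  qed
qed

lemma MT_finite_span:
  assumes pp: "\<forall>s. 0 < p s" and fT: "finite T"
  shows "Mat_loc p T \<subseteq> fv.span ((\<lambda>q. munit p T (fst q) (snd q)) ` (omega p T \<times> omega p T))"
proof
  fix X assume "X \<in> Mat_loc p T"
  then have X: "local_in p T X" by (simp add: Mat_loc_iff)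
  show "X \<in> fv.span ((\<lambda>q. munit p T (fst q) (snd q)) ` (omega p T \<times> omega p T))"
    by (subst munit_expand[OF pp X]) (intro fv.span_sum fv.span_scale fv.span_base; blast)
qed

lemma subspace_finite_span:
  assumes pp: "\<forall>s. 0 < p s" and fT: "finite T" and W: "W \<subseteq> Mat_loc p T"
  shows "\<exists>E. finite E \<and> E \<subseteq> W \<and> W \<subseteq> fv.span E"
proof -
  obtain E where E: "E \<subseteq> W" "fv.independent E" "W \<subseteq> fv.span E"
    using fv.maximal_independent_subset[of W] by blast
  let ?U = "(\<lambda>q. munit p T (fst q) (snd q)) ` (omega p T \<times> omega p T)"
  have "finite ?U" using finite_omega[OF fT] by simp
  moreover have "E \<subseteq> fv.span ?U" using E(1) W MT_finite_span[OF pp fT] by blast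
  ultimately have "finite E" using fv.independent_span_bound E(2) by blast
  then show ?thesis using E by blast
qed

definition proj :: "('d site \<Rightarrow> nat) \<Rightarrow> 'd site set \<Rightarrow> 'd op set \<Rightarrow> 'd op \<Rightarrow> 'd op" where
  "proj p T W x = (SOME y. y \<in> W \<and> (\<forall>w\<in>W. ip p T (x - y) w = 0))"

lemma proj_spec:
  assumes pp: "\<forall>s. 0 < p s" and fT: "finite T" and W: "fv.subspace W" "W \<subseteq> Mat_loc p T"
    and x: "local_in p T x"
  shows "proj p T W x \<in> W \<and> (\<forall>w\<in>W. ip p T (x - proj p T W x) w = 0)"
proof -
  obtain E where E: "finite E" "E \<subseteq> W" "W \<subseteq> fv.span E"
    using subspace_finite_span[OF pp fT W(2)] by blast
  obtain y where y: "y \<in> fv.span E" "\<forall>e\<in>E. ip p T (x - y) e = 0"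
    using proj_exists[OF pp fT E(1)] E(2) W(2) x by blast
  have "y \<in> W" using y(1) fv.span_minimal[OF E(2) W(1)] by blast
  moreover have "\<forall>w\<in>W. ip p T (x - y) w = 0" using ortho_span[OF y(2)] E(3) by blast
  ultimately have "\<exists>y. y \<in> W \<and> (\<forall>w\<in>W. ip p T (x - y) w = 0)" by blast
  then show ?thesis unfolding proj_def by (rule someI_ex)
qed

lemma proj_unique:
  assumes pp: "\<forall>s. 0 < p s" and fT: "finite T" and W: "fv.subspace W" "W \<subseteq> Mat_loc p T"
    and x: "local_in p T x" and y: "y \<in> W" "\<forall>w\<in>W. ip p T (x - y) w = 0"
  shows "proj p T W x = y"
proof -
  note P = proj_spec[OF pp fT W x]
  let ?z = "proj p T W x - y"
  have zW: "?z \<in> W" using P y(1) W(1) fv.subspace_diff by blast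
  have "ip p T ?z ?z = ip p T ((x - y) - (x - proj p T W x)) ?z" by (simp add: algebra_simps)
  also have "\<dots> = 0" using P y(2) zW by (simp add: ip_diff_left)
  finally have zz: "ip p T ?z ?z = 0" .
  have "local_in p T ?z" using zW W(2) by (auto simp: Mat_loc_iff)
  then have "?z = 0" using ip_pos[OF pp _ zz] by blast
  then show ?thesis by simp
qed


lemma mult_munit_right:
  assumes X: "local_in p S X" and r: "\<rho> \<in> omega p S" and t: "\<tau> \<in> cfgs p" "\<forall>s\<in>S. \<tau> s = \<rho>' s"
  shows "op_mult X (munit p S \<rho> \<rho>') (\<sigma>, \<tau>) = X (\<sigma>, (\<lambda>s. if s \<in> S then \<rho> s else \<tau> s))"
proof -
  define \<mu> where "\<mu> = (\<lambda>s. if s \<in> S then \<rho> s else \<tau> s)"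
  have fS: "finite S" using X local_finite by auto
  let ?F = "insert \<mu> (rowset p S \<sigma>)"
  have fF: "finite ?F" using finite_rowset[OF fS] by simp
  have mc: "\<mu> \<in> cfgs p" using r t by (auto simp: \<mu>_def omega_iff cfgs_def)
  have "op_mult X (munit p S \<rho> \<rho>') (\<sigma>, \<tau>) = (\<Sum>m\<in>?F. X (\<sigma>, m) * munit p S \<rho> \<rho>' (m, \<tau>))"
    by (rule op_mult_sum[OF fF]) (use local_row[OF X] in blast)
  also have "\<dots> = X (\<sigma>, \<mu>) * munit p S \<rho> \<rho>' (\<mu>, \<tau>)"
  proof (rule sum_single[OF fF])
    fix m assume m: "m \<in> ?F" "m \<noteq> \<mu>"
    have "munit p S \<rho> \<rho>' (m, \<tau>) = 0"
    proof (rule ccontr)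
      assume "munit p S \<rho> \<rho>' (m, \<tau>) \<noteq> 0"
      then have "(\<forall>s\<in>S. m s = \<rho> s) \<and> (\<forall>s. s \<notin> S \<longrightarrow> m s = \<tau> s)"
        by (auto simp: munit_def split: if_splits)
      then have "m = \<mu>" by (auto simp: \<mu>_def fun_eq_iff)
      then show False using m by simp
    qed
    then show "X (\<sigma>, m) * munit p S \<rho> \<rho>' (m, \<tau>) = 0" by simp
  qed simp
  also have "munit p S \<rho> \<rho>' (\<mu>, \<tau>) = 1"
    using mc t by (auto simp: munit_def \<mu>_def)
  finally show ?thesis by (simp add: \<mu>_def)
qed

lemma mult_munit_left:
  assumes X: "local_in p S X" and r: "\<rho>' \<in> omega p S" and sg: "\<sigma> \<in> cfgs p" "\<forall>s\<in>S. \<sigma> s = \<rho> s"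
  shows "op_mult (munit p S \<rho> \<rho>') X (\<sigma>, \<tau>) = X ((\<lambda>s. if s \<in> S then \<rho>' s else \<sigma> s), \<tau>)"
proof -
  define \<nu> where "\<nu> = (\<lambda>s. if s \<in> S then \<rho>' s else \<sigma> s)"
  have nc: "\<nu> \<in> cfgs p" using r sg by (auto simp: \<nu>_def omega_iff cfgs_def)
  have "op_mult (munit p S \<rho> \<rho>') X (\<sigma>, \<tau>) = (\<Sum>m\<in>{\<nu>}. munit p S \<rho> \<rho>' (\<sigma>, m) * X (m, \<tau>))"
  proof (rule op_mult_sum)
    show "{m. munit p S \<rho> \<rho>' (\<sigma>, m) \<noteq> 0} \<subseteq> {\<nu>}"
      by (auto simp: munit_def \<nu>_def fun_eq_iff split: if_splits) metis
  qed simp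
  moreover have "munit p S \<rho> \<rho>' (\<sigma>, \<nu>) = 1" using nc sg by (auto simp: munit_def \<nu>_def)
  ultimately show ?thesis by (simp add: \<nu>_def)
qed

lemma mult_munit_left0:
  assumes "\<not> (\<forall>s\<in>S. \<sigma> s = \<rho> s)"
  shows "op_mult (munit p S \<rho> \<rho>') X (\<sigma>, \<tau>) = 0"
proof -
  have "op_mult (munit p S \<rho> \<rho>') X (\<sigma>, \<tau>) = (\<Sum>m\<in>{}. munit p S \<rho> \<rho>' (\<sigma>, m) * X (m, \<tau>))"
    by (rule op_mult_sum) (use assms in \<open>auto simp: munit_def split: if_splits\<close>)
  then show ?thesis by simp
qed

lemma center_trivial:
  assumes pp: "\<forall>s. 0 < p s" and X: "local_in p S X"
    and comm: "\<And>Y. local_in p S Y \<Longrightarrow> op_mult X Y = op_mult Y X"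
  shows "\<exists>k. X = fscale k (op_one p)"
proof -
  have fS: "finite S" using X local_finite by auto
  define z where "z = (\<lambda>_::'a site. 0::nat)"
  have zo: "z \<in> omega p S" using pp by (auto simp: z_def omega_iff cfgs_def)
  have zc: "z \<in> cfgs p" using zo by (simp add: omega_iff)
  define k where "k = X (z, z)"
  have diag: "X (\<sigma>, \<sigma>) = k" if sc: "\<sigma> \<in> cfgs p" for \<sigma>
  proof -
    define sS where "sS = (\<lambda>s. if s \<in> S then \<sigma> s else 0)"
    define t1 where "t1 = (\<lambda>s. if s \<in> S then 0 else \<sigma> s)"
    have sSo: "sS \<in> omega p S" using zero_ext_cfg[OF pp sc] by (simp add: sS_def)
    have t1c: "t1 \<in> cfgs p" using sc pp by (auto simp: t1_def cfgs_def)
    have U: "local_in p S (munit p S sS z)" by (rule munit_local[OF fS])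
    have "op_mult X (munit p S sS z) (\<sigma>, t1) = X (\<sigma>, \<sigma>)"
      using mult_munit_right[OF X sSo t1c, of z \<sigma>] by (simp add: t1_def z_def sS_def if_distrib cong: if_cong)
    moreover have "op_mult (munit p S sS z) X (\<sigma>, t1) = X (t1, t1)"
      using mult_munit_left[OF X zo sc, of sS t1] by (simp add: t1_def z_def sS_def cong: if_cong)
    ultimately have "X (\<sigma>, \<sigma>) = X (t1, t1)" using comm[OF U] by simp
    also have "\<dots> = X (z, z)"
      by (rule local_eq[OF X t1c t1c zc zc]) (auto simp: t1_def z_def)
    finally show ?thesis by (simp add: k_def)
  qed
  have off: "X (\<sigma>, \<tau>) = 0" if "\<sigma> \<noteq> \<tau>" for \<sigma> \<tau>
  proof (rule ccontr)
    assume nz: "X (\<sigma>, \<tau>) \<noteq> 0"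
    note h = local_nz[OF X nz]
    define tS where "tS = (\<lambda>s. if s \<in> S then \<tau> s else 0)"
    have tSo: "tS \<in> omega p S" using zero_ext_cfg[OF pp] h by (simp add: tS_def)
    have U: "local_in p S (munit p S tS tS)" by (rule munit_local[OF fS])
    have "op_mult X (munit p S tS tS) (\<sigma>, \<tau>) = X (\<sigma>, \<tau>)"
      using mult_munit_right[OF X tSo, of \<tau> tS \<sigma>] h by (simp add: tS_def if_distrib cong: if_cong)
    moreover have "\<not> (\<forall>s\<in>S. \<sigma> s = tS s)"
    proof
      assume "\<forall>s\<in>S. \<sigma> s = tS s"
      then have "\<sigma> = \<tau>" using h by (auto simp: tS_def fun_eq_iff)
      then show False using that by simp
    qed
    then have "op_mult (munit p S tS tS) X (\<sigma>, \<tau>) = 0" by (rule mult_munit_left0)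
    ultimately show False using comm[OF U] nz by simp
  qed
  have "X = fscale k (op_one p)"
  proof (rule ext, clarify)
    fix \<sigma> \<tau>
    show "X (\<sigma>, \<tau>) = fscale k (op_one p) (\<sigma>, \<tau>)"
    proof (cases "\<sigma> = \<tau> \<and> \<sigma> \<in> cfgs p")
      case True then show ?thesis using diag by (auto simp: fscale_apply op_one_def)
    next
      case False
      then have "X (\<sigma>, \<tau>) = 0" using off local_nz[OF X] by blast
      then show ?thesis using False by (auto simp: fscale_apply op_one_def)
    qed
  qed
  then show ?thesis by blast
qed

lemma disjoint_commute:
  assumes X: "local_in p S X" and Y: "local_in p R Y" and d: "S \<inter> R = {}"
  shows "op_mult X Y = op_mult Y X"
proof (rule ext, clarify)
  fix \<sigma> \<tau>
  have fU: "finite (S \<union> R)" using X Y local_finite by auto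
  have XU: "local_in p (S \<union> R) X" by (rule local_mono[OF X _ fU]) auto
  have YU: "local_in p (S \<union> R) Y" by (rule local_mono[OF Y _ fU]) auto
  show "op_mult X Y (\<sigma>, \<tau>) = op_mult Y X (\<sigma>, \<tau>)"
  proof (cases "\<sigma> \<in> cfgs p \<and> \<tau> \<in> cfgs p \<and> (\<forall>s. s \<notin> S \<union> R \<longrightarrow> \<sigma> s = \<tau> s)")
    case False
    have "op_mult X Y (\<sigma>, \<tau>) = 0" using local_nz[OF local_mult[OF XU YU]] False by blast
    moreover have "op_mult Y X (\<sigma>, \<tau>) = 0" using local_nz[OF local_mult[OF YU XU]] False by blast
    ultimately show ?thesis by simp
  next
    case True
    define m1 where "m1 = (\<lambda>s. if s \<in> S then \<tau> s else \<sigma> s)"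
    define m2 where "m2 = (\<lambda>s. if s \<in> R then \<tau> s else \<sigma> s)"
    have c1: "m1 \<in> cfgs p" "m2 \<in> cfgs p" using True by (auto simp: m1_def m2_def cfgs_def)
    have fS: "finite S" "finite R" using X Y local_finite by auto
    have "op_mult X Y (\<sigma>, \<tau>) = (\<Sum>m\<in>insert m1 (rowset p S \<sigma>). X (\<sigma>, m) * Y (m, \<tau>))"
      by (rule op_mult_sum) (use finite_rowset[OF fS(1)] local_row[OF X] in auto)
    also have "\<dots> = X (\<sigma>, m1) * Y (m1, \<tau>)"
    proof (rule sum_single)
      fix m assume m: "m \<in> insert m1 (rowset p S \<sigma>)" "m \<noteq> m1"
      show "X (\<sigma>, m) * Y (m, \<tau>) = 0"
      proof (rule ccontr)
        assume "X (\<sigma>, m) * Y (m, \<tau>) \<noteq> 0"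
        then have "X (\<sigma>, m) \<noteq> 0" "Y (m, \<tau>) \<noteq> 0" by auto
        then have "\<forall>s. s \<notin> S \<longrightarrow> \<sigma> s = m s" "\<forall>s. s \<notin> R \<longrightarrow> m s = \<tau> s"
          using local_nz[OF X] local_nz[OF Y] by blast+
        then have "m = m1" using d by (auto simp: m1_def fun_eq_iff)
        then show False using m by simp
      qed
    qed (use finite_rowset[OF fS(1)] in auto)
    also have "X (\<sigma>, m1) = X (m2, \<tau>)"
      by (rule local_eq[OF X True[THEN conjunct1] c1(1) c1(2) True[THEN conjunct2, THEN conjunct1]])
         (use True d in \<open>auto simp: m1_def m2_def\<close>)
    also have "Y (m1, \<tau>) = Y (\<sigma>, m2)"
      by (rule local_eq[OF Y c1(1) True[THEN conjunct2, THEN conjunct1] True[THEN conjunct1] c1(2)])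
         (use True d in \<open>auto simp: m1_def m2_def\<close>)
    also have "X (m2, \<tau>) * Y (\<sigma>, m2) = Y (\<sigma>, m2) * X (m2, \<tau>)" by simp
    also have "\<dots> = (\<Sum>m\<in>insert m2 (rowset p R \<sigma>). Y (\<sigma>, m) * X (m, \<tau>))"
    proof (rule sum_single[symmetric])
      fix m assume m: "m \<in> insert m2 (rowset p R \<sigma>)" "m \<noteq> m2"
      show "Y (\<sigma>, m) * X (m, \<tau>) = 0"
      proof (rule ccontr)
        assume "Y (\<sigma>, m) * X (m, \<tau>) \<noteq> 0"
        then have "Y (\<sigma>, m) \<noteq> 0" "X (m, \<tau>) \<noteq> 0" by auto
        then have "\<forall>s. s \<notin> R \<longrightarrow> \<sigma> s = m s" "\<forall>s. s \<notin> S \<longrightarrow> m s = \<tau> s"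
          using local_nz[OF X] local_nz[OF Y] by blast+
        then have "m = m2" using d by (auto simp: m2_def fun_eq_iff)
        then show False using m by simp
      qed
    qed (use finite_rowset[OF fS(2)] in auto)
    also have "\<dots> = op_mult Y X (\<sigma>, \<tau>)"
      by (rule op_mult_sum[symmetric]) (use finite_rowset[OF fS(2)] local_row[OF Y] in auto)
    finally show ?thesis by (simp add: mult.commute)
  qed
qed

lemma mult_diff_left:
  assumes "local_in p S X" "local_in p S X'"
  shows "op_mult (X - X') Y = op_mult X Y - op_mult X' Y"
proof -
  have l: "local_in p S (fscale (-1) X')" using assms(2) by (rule local_scale)
  have "X - X' = X + fscale (-1) X'" by (simp add: fun_eq_iff fun_simps)
  then have "op_mult (X - X') Y = op_mult X Y + op_mult (fscale (-1) X') Y"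
    using mult_add_left[OF assms(1) l] by simp
  also have "op_mult (fscale (-1) X') Y = fscale (-1) (op_mult X' Y)" by (rule mult_scale_left[OF assms(2)])
  also have "op_mult X Y + fscale (-1) (op_mult X' Y) = op_mult X Y - op_mult X' Y"
    by (simp add: fun_eq_iff fun_simps)
  finally show ?thesis .
qed

locale projset =
  fixes p :: "'d site \<Rightarrow> nat" and T :: "'d site set" and W :: "'d op set"
  assumes pp: "\<forall>s. 0 < p s" and fT: "finite T" and Wsub: "fv.subspace W" and WT: "W \<subseteq> Mat_loc p T"
    and Wmult: "\<And>u w. u \<in> W \<Longrightarrow> w \<in> W \<Longrightarrow> op_mult u w \<in> W"
    and Wstar: "\<And>u. u \<in> W \<Longrightarrow> op_star u \<in> W"
begin

abbreviation "P \<equiv> proj p T W"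

lemma Wloc: "w \<in> W \<Longrightarrow> local_in p T w" using WT by (auto simp: Mat_loc_iff)

lemma P_spec: "local_in p T x \<Longrightarrow> P x \<in> W \<and> (\<forall>w\<in>W. ip p T (x - P x) w = 0)"
  by (rule proj_spec[OF pp fT Wsub WT])

lemma P_unique: "local_in p T x \<Longrightarrow> y \<in> W \<Longrightarrow> (\<forall>w\<in>W. ip p T (x - y) w = 0) \<Longrightarrow> P x = y"
  by (rule proj_unique[OF pp fT Wsub WT])

lemma P_loc: "local_in p T x \<Longrightarrow> local_in p T (P x)" using P_spec Wloc by blast

lemma P_zero: "P 0 = 0"
proof -
  have "local_in p T (0::'d op)" using local_zero[OF fT] by (simp add: zero_fun_def)
  then show ?thesis by (rule P_unique) (auto simp: fv.subspace_0[OF Wsub] ip_zero_left)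
qed

lemma P_sum:
  assumes fI: "finite I" and loc: "\<And>i. i \<in> I \<Longrightarrow> local_in p T (f i)"
  shows "P (\<Sum>i\<in>I. f i) = (\<Sum>i\<in>I. P (f i))"
proof (rule P_unique)
  show "local_in p T (\<Sum>i\<in>I. f i)" using fI fT loc by (rule local_sum)
  show "(\<Sum>i\<in>I. P (f i)) \<in> W"
    by (rule fv.subspace_sum[OF Wsub]) (use P_spec[OF loc] in blast)
  show "\<forall>w\<in>W. ip p T ((\<Sum>i\<in>I. f i) - (\<Sum>i\<in>I. P (f i))) w = 0"
  proof
    fix w assume w: "w \<in> W"
    have "ip p T ((\<Sum>i\<in>I. f i) - (\<Sum>i\<in>I. P (f i))) w = ip p T (\<Sum>i\<in>I. f i - P (f i)) w"
      by (simp add: sum_subtractf)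
    also have "\<dots> = (\<Sum>i\<in>I. ip p T (f i - P (f i)) w)" by (rule ip_sum_left)
    also have "\<dots> = 0" using P_spec[OF loc] w by simp
    finally show "ip p T ((\<Sum>i\<in>I. f i) - (\<Sum>i\<in>I. P (f i))) w = 0" .
  qed
qed

lemma P_mod_left:
  assumes c: "c \<in> W" and x: "local_in p T x"
  shows "P (op_mult c x) = op_mult c (P x)"
proof (rule P_unique)
  show "local_in p T (op_mult c x)" using Wloc[OF c] x by (rule local_mult)
  show "op_mult c (P x) \<in> W" using Wmult[OF c] P_spec[OF x] by blast
  show "\<forall>w\<in>W. ip p T (op_mult c x - op_mult c (P x)) w = 0"
  proof
    fix w assume w: "w \<in> W"
    have "ip p T (op_mult c x - op_mult c (P x)) w = ip p T (op_mult c (x - P x)) w"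
      by (simp add: mult_diff_right)
    also have "\<dots> = ip p T (x - P x) (op_mult (op_star c) w)" by (rule ip_mult_left[OF Wloc[OF c]])
    also have "\<dots> = 0" using P_spec[OF x] Wmult[OF Wstar[OF c] w] by blast
    finally show "ip p T (op_mult c x - op_mult c (P x)) w = 0" .
  qed
qed

lemma P_mod_right:
  assumes c: "c \<in> W" and x: "local_in p T x"
  shows "P (op_mult x c) = op_mult (P x) c"
proof (rule P_unique)
  show "local_in p T (op_mult x c)" using x Wloc[OF c] by (rule local_mult)
  show "op_mult (P x) c \<in> W" using Wmult[OF _ c] P_spec[OF x] by blast
  show "\<forall>w\<in>W. ip p T (op_mult x c - op_mult (P x) c) w = 0"
  proof
    fix w assume w: "w \<in> W"
    have d: "local_in p T (x - P x)" using x P_loc[OF x] by (rule local_diff)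
    have "ip p T (op_mult x c - op_mult (P x) c) w = ip p T (op_mult (x - P x) c) w"
      by (simp add: mult_diff_left[OF x P_loc[OF x]])
    also have "\<dots> = ip p T (x - P x) (op_mult w (op_star c))" by (rule ip_mult_right[OF d Wloc[OF w]])
    also have "\<dots> = 0" using P_spec[OF x] Wmult[OF w Wstar[OF c]] by blast
    finally show "ip p T (op_mult x c - op_mult (P x) c) w = 0" .
  qed
qed

lemma P_central:
  assumes x: "local_in p T x" and comm: "\<And>c. c \<in> W \<Longrightarrow> op_mult c x = op_mult x c" and c: "c \<in> W"
  shows "op_mult c (P x) = op_mult (P x) c"
  using P_mod_left[OF c x] P_mod_right[OF c x] comm[OF c] by simp

lemma P_trace:
  assumes x: "local_in p T x" and one: "op_one p \<in> W"
  shows "ip p T (P x) (op_one p) = ip p T x (op_one p)"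
proof -
  have "ip p T (x - P x) (op_one p) = 0" using P_spec[OF x] one by blast
  then show ?thesis by (simp add: ip_diff_left)
qed

end

context VSset begin

lemma central_local:
  assumes l: "\<forall>a\<in>A. a \<notin> {fscale k (op_one p) | k. True} \<longrightarrow>
        (\<forall>s\<in>Supp p a. \<exists>w\<in>A \<inter> Mat_loc p (thicken {s} l). op_mult a w \<noteq> op_mult w a)"
    and fT: "finite T"
    and z: "z \<in> A" "local_in p T z"
    and comm: "\<And>w. w \<in> A \<Longrightarrow> local_in p T w \<Longrightarrow> op_mult z w = op_mult w z"
  shows "local_in p {t\<in>T. \<not> thicken {t} l \<subseteq> T} z"
proof -
  let ?R = "{t\<in>T. \<not> thicken {t} l \<subseteq> T}"
  have fR: "finite ?R" using fT by simp
  show ?thesis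
  proof (cases "z \<in> {fscale k (op_one p) | k. True}")
    case True
    then obtain k where k: "z = fscale k (op_one p)" by blast
    have "local_in p {} z" unfolding k by (rule local_scale[OF local_one])
    then show ?thesis by (rule local_mono) (use fR in auto)
  next
    case False
    have zM: "z \<in> Mat p" using z Mat_iff by blast
    note Sp = Supp_spec[OF zM]
    have "Supp p z \<subseteq> ?R"
    proof
      fix s assume s: "s \<in> Supp p z"
      have sT: "s \<in> T" using Sp z(2) s by blast
      obtain w where w: "w \<in> A" "w \<in> Mat_loc p (thicken {s} l)" "op_mult z w \<noteq> op_mult w z"
        using l z(1) False s by blast
      show "s \<in> ?R"
      proof (rule ccontr)
        assume "s \<notin> ?R"
        then have sub: "thicken {s} l \<subseteq> T" using sT by blast
        have "local_in p T w" using w(2) local_mono[OF _ sub fT] by (auto simp: Mat_loc_iff)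
        then show False using comm[OF w(1)] w(3) by blast
      qed
    qed
    then show ?thesis using Sp local_mono fR by blast
  qed
qed

lemma core:
  assumes fB: "finite Bi" and BiB: "Bi \<subseteq> B" and ind: "fv.independent Bi"
    and aA: "\<And>v. v \<in> Bi \<Longrightarrow> a v \<in> A"
    and sum0: "(\<Sum>v\<in>Bi. op_mult (a v) v) = 0"
    and v0: "v0 \<in> Bi"
  shows "a v0 = 0"
proof -
  obtain l :: nat where l: "\<forall>a\<in>A. a \<notin> {fscale k (op_one p) | k. True} \<longrightarrow>
        (\<forall>s\<in>Supp p a. \<exists>w\<in>A \<inter> Mat_loc p (thicken {s} l). op_mult a w \<noteq> op_mult w a)"
    using vs unfolding VS_def by blast
  obtain S where S: "finite S" "\<forall>i\<in>Bi \<union> a ` Bi. local_in p S (id i)"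
  proof -
    have "finite (Bi \<union> a ` Bi)" using fB by simp
    moreover have "id i \<in> Mat p" if "i \<in> Bi \<union> a ` Bi" for i
      using that BiB aA A_Mat B_Mat by auto
    ultimately show ?thesis using common_support[of "Bi \<union> a ` Bi" id p] that by blast
  qed
  have Sv: "local_in p S v" "local_in p S (a v)" if "v \<in> Bi" for v using S(2) that by auto
  define T where "T = thicken S l"
  have fT: "finite T" using S(1) by (simp add: T_def finite_thicken)
  have ST: "S \<subseteq> T" by (simp add: T_def sub_thicken)
  define R where "R = {t\<in>T. \<not> thicken {t} l \<subseteq> T}"
  have SR: "S \<inter> R = {}" using thicken_mono1[of _ S l] by (auto simp: R_def T_def)
  have locT: "local_in p T x" if "local_in p S x" for x using local_mono[OF that ST fT] .
  have Bloc: "local_in p T v" "local_in p T (a v)" if "v \<in> Bi" for v using Sv[OF that] locT by auto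
  let ?E = "Bi - {v0}"
  have spanS: "fv.span ?E \<subseteq> Mat_loc p S"
    using Sv by (intro fv.span_minimal MT_subspace S(1)) (auto simp: Mat_loc_iff)
  have spanB: "fv.span ?E \<subseteq> B" using BiB by (intro fv.span_minimal B_subspace) auto
  obtain y where y: "y \<in> fv.span ?E" "\<forall>e\<in>?E. ip p T (v0 - y) e = 0"
  proof -
    have "?E \<subseteq> Mat_loc p T" using Bloc by (auto simp: Mat_loc_iff)
    then have "\<exists>y\<in>fv.span ?E. \<forall>e\<in>?E. ip p T (v0 - y) e = 0"
      using proj_exists[OF ppos fT, of ?E] fB Bloc(1)[OF v0] by blast
    then show ?thesis using that by blast
  qed
  define r where "r = v0 - y"
  have rS: "local_in p S r" unfolding r_def using Sv(1)[OF v0] spanS y(1) by (intro local_diff) (auto simp: Mat_loc_iff)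
  have rT: "local_in p T r" using locT[OF rS] .
  have rB: "r \<in> B" unfolding r_def using BiB v0 spanB y(1) B_subspace fv.subspace_diff by blast
  have "r \<noteq> 0"
  proof
    assume "r = 0"
    then have "v0 \<in> fv.span ?E" using y(1) by (simp add: r_def)
    then show False using ind v0 unfolding fv.dependent_def by blast
  qed
  then have rr: "ip p T r r \<noteq> 0" using ip_pos[OF ppos rT] by blast
  have r_other: "ip p T v r = 0" if "v \<in> Bi" "v \<noteq> v0" for v
    using y(2) that ip_cnj[of p T v r] by (simp add: r_def)
  have "ip p T y r = 0" using ip_cnj[of p T y r] ortho_span[OF y(2) y(1)] by (simp add: r_def)
  then have r_v0: "ip p T v0 r = ip p T r r"
    by (simp add: r_def ip_diff_left)
  define x where "x = op_star r"
  have xS: "local_in p S x" unfolding x_def using rS by (rule local_star)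
  have xB: "x \<in> B" unfolding x_def using rB by (rule B_star)
  define yv where "yv v = op_mult v x" for v
  have yvS: "local_in p S (yv v)" if "v \<in> Bi" for v unfolding yv_def using Sv[OF that] xS by (intro local_mult)
  have yvT: "local_in p T (yv v)" if "v \<in> Bi" for v using locT[OF yvS[OF that]] .
  have yvB: "yv v \<in> B" if "v \<in> Bi" for v unfolding yv_def using BiB that xB by (intro B_mult) auto
  have sum_yv: "(\<Sum>v\<in>Bi. op_mult (a v) (yv v)) = 0"
  proof -
    have "(\<Sum>v\<in>Bi. op_mult (a v) (yv v)) = (\<Sum>v\<in>Bi. op_mult (op_mult (a v) v) x)"
      unfolding yv_def by (intro sum.cong refl) (simp add: mult_assoc[OF Sv(2) Sv(1)])
    also have "\<dots> = op_mult (\<Sum>v\<in>Bi. op_mult (a v) v) x"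
      by (rule mult_sum_left[symmetric, OF fB S(1)]) (rule local_mult[OF Sv(2) Sv(1)])
    also have "\<dots> = 0" by (simp add: sum0 mult_zero_left)
    finally show ?thesis .
  qed
  define C where "C = A \<inter> Mat_loc p T"
  interpret PC: projset p T C
  proof
    show "\<forall>s. 0 < p s" by (rule ppos)
    show "finite T" by (rule fT)
    show "fv.subspace C" unfolding C_def by (intro fv.subspace_inter A_subspace MT_subspace fT)
    show "C \<subseteq> Mat_loc p T" by (auto simp: C_def)
    show "op_mult u w \<in> C" if "u \<in> C" "w \<in> C" for u w
      using that by (auto simp: C_def Mat_loc_iff A_mult local_mult)
    show "op_star u \<in> C" if "u \<in> C" for u
      using that by (auto simp: C_def Mat_loc_iff A_star local_star)
  qed
  define z where "z v = PC.P (yv v)" for v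
  have zC: "z v \<in> C" if "v \<in> Bi" for v using PC.P_spec[OF yvT[OF that]] by (simp add: z_def)
  have zR: "local_in p R (z v)" if "v \<in> Bi" for v
  proof -
    have "local_in p R (z v)" unfolding R_def
    proof (rule central_local[OF l fT])
      show "z v \<in> A" "local_in p T (z v)" using zC[OF that] by (auto simp: C_def Mat_loc_iff)
      fix w assume "w \<in> A" "local_in p T w"
      then have wC: "w \<in> C" by (simp add: C_def Mat_loc_iff)
      have "op_mult w (z v) = op_mult (z v) w" unfolding z_def
        by (rule PC.P_central[OF yvT[OF that] _ wC]) (use B_comm yvB[OF that] in \<open>auto simp: C_def\<close>)
      then show "op_mult (z v) w = op_mult w (z v)" by simp
    qed
    then show ?thesis .
  qed
  have aC: "a v \<in> C" if "v \<in> Bi" for v using aA[OF that] Bloc[OF that] by (simp add: C_def Mat_loc_iff)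
  have sum_z: "(\<Sum>v\<in>Bi. op_mult (a v) (z v)) = 0"
  proof -
    have "(\<Sum>v\<in>Bi. op_mult (a v) (z v)) = (\<Sum>v\<in>Bi. PC.P (op_mult (a v) (yv v)))"
      unfolding z_def by (intro sum.cong refl) (simp add: PC.P_mod_left[OF aC yvT])
    also have "\<dots> = PC.P (\<Sum>v\<in>Bi. op_mult (a v) (yv v))"
      by (rule PC.P_sum[symmetric, OF fB]) (simp add: local_mult Bloc yvT)
    also have "\<dots> = 0" by (simp add: sum_yv PC.P_zero)
    finally show ?thesis .
  qed
  define D where "D = Mat_loc p S"
  interpret PD: projset p T D
  proof
    show "\<forall>s. 0 < p s" by (rule ppos)
    show "finite T" by (rule fT)
    show "fv.subspace D" unfolding D_def by (intro MT_subspace S(1))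
    show "D \<subseteq> Mat_loc p T" using locT by (auto simp: D_def Mat_loc_iff)
    show "op_mult u w \<in> D" if "u \<in> D" "w \<in> D" for u w
      using that by (auto simp: D_def Mat_loc_iff local_mult)
    show "op_star u \<in> D" if "u \<in> D" for u
      using that by (auto simp: D_def Mat_loc_iff local_star)
  qed
  have RT: "R \<subseteq> T" by (auto simp: R_def)
  have zT: "local_in p T (z v)" if "v \<in> Bi" for v using zC[OF that] by (auto simp: C_def Mat_loc_iff)
  have Gz: "\<exists>k. PD.P (z v) = fscale k (op_one p)" if v: "v \<in> Bi" for v
  proof (rule center_trivial[OF ppos])
    show "local_in p S (PD.P (z v))" using PD.P_spec[OF zT[OF v]] by (simp add: D_def Mat_loc_iff)
    fix Y assume Y: "local_in p S Y"
    then have YD: "Y \<in> D" by (simp add: D_def Mat_loc_iff)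
    have "op_mult Y (PD.P (z v)) = op_mult (PD.P (z v)) Y"
    proof (rule PD.P_central[OF zT[OF v] _ YD])
      fix c assume "c \<in> D"
      then have "local_in p S c" by (simp add: D_def Mat_loc_iff)
      then show "op_mult c (z v) = op_mult (z v) c" using disjoint_commute[OF _ zR[OF v] SR] by blast
    qed
    then show "op_mult (PD.P (z v)) Y = op_mult Y (PD.P (z v))" by simp
  qed
  then obtain k where k: "\<And>v. v \<in> Bi \<Longrightarrow> PD.P (z v) = fscale (k v) (op_one p)" by metis
  have aD: "a v \<in> D" if "v \<in> Bi" for v using Sv[OF that] by (simp add: D_def Mat_loc_iff)
  have sum_k: "(\<Sum>v\<in>Bi. fscale (k v) (a v)) = 0"
  proof -
    have "(\<Sum>v\<in>Bi. fscale (k v) (a v)) = (\<Sum>v\<in>Bi. op_mult (a v) (PD.P (z v)))"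
      by (intro sum.cong refl) (simp add: k mult_scale_right mult_one[OF Sv(2)])
    also have "\<dots> = (\<Sum>v\<in>Bi. PD.P (op_mult (a v) (z v)))"
      by (intro sum.cong refl) (simp add: PD.P_mod_left[OF aD zT])
    also have "\<dots> = PD.P (\<Sum>v\<in>Bi. op_mult (a v) (z v))"
      by (rule PD.P_sum[symmetric, OF fB]) (simp add: local_mult Bloc zT)
    also have "\<dots> = 0" by (simp add: sum_z PD.P_zero)
    finally show ?thesis .
  qed
  have oneT: "local_in p T (op_one p)" by (rule local_one'[OF fT])
  have oneC: "op_one p \<in> C" using A_one oneT by (simp add: C_def Mat_loc_iff)
  have oneD: "op_one p \<in> D" using local_one'[OF S(1)] by (simp add: D_def Mat_loc_iff)
  have kval: "k v * ip p T (op_one p) (op_one p) = ip p T v r" if v: "v \<in> Bi" for v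
  proof -
    have "k v * ip p T (op_one p) (op_one p) = ip p T (PD.P (z v)) (op_one p)"
      by (simp add: k[OF v] ip_scale_left)
    also have "\<dots> = ip p T (z v) (op_one p)" by (rule PD.P_trace[OF zT[OF v] oneD])
    also have "\<dots> = ip p T (yv v) (op_one p)" unfolding z_def by (rule PC.P_trace[OF yvT[OF v] oneC])
    also have "\<dots> = ip p T v (op_mult (op_one p) (op_star x))"
      unfolding yv_def by (rule ip_mult_right[OF Bloc(1)[OF v] oneT])
    also have "\<dots> = ip p T v r" by (simp add: x_def one_mult[OF rS])
    finally show ?thesis .
  qed
  have "(\<Sum>v\<in>Bi. fscale (ip p T v r) (a v)) = fscale (ip p T (op_one p) (op_one p)) (\<Sum>v\<in>Bi. fscale (k v) (a v))"
    by (simp add: fv.scale_sum_right kval[symmetric] mult.commute)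
  also have "\<dots> = 0" by (simp add: sum_k fun_eq_iff fscale_apply zero_fun_apply)
  finally have S0: "(\<Sum>v\<in>Bi. fscale (ip p T v r) (a v)) = 0" .
  have "(\<Sum>v\<in>Bi. fscale (ip p T v r) (a v)) = fscale (ip p T v0 r) (a v0)"
  proof -
    have "(\<Sum>v\<in>Bi. fscale (ip p T v r) (a v)) = fscale (ip p T v0 r) (a v0) + (\<Sum>v\<in>Bi - {v0}. fscale (ip p T v r) (a v))"
      using fB v0 by (simp add: sum.remove)
    also have "(\<Sum>v\<in>Bi - {v0}. fscale (ip p T v r) (a v)) = 0"
      by (rule sum.neutral) (auto simp: r_other fun_eq_iff fscale_apply zero_fun_apply)
    finally show ?thesis by simp
  qed
  then have "fscale (ip p T v0 r) (a v0) = 0" using S0 by simp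
  then show "a v0 = 0" using rr r_v0 by (auto simp: fun_eq_iff fscale_apply zero_fun_apply)
qed

end

lemma cspan_eq: "cspan V = fv.span V"
proof -
  have e: "(\<Sum>u\<in>F. fscale (c u) u) = (\<lambda>x. \<Sum>u\<in>F. c u * u x)" for F c
    by (simp add: fun_eq_iff fsum_apply fscale_apply)
  show ?thesis unfolding cspan_def fv.span_explicit
  proof (intro set_eqI iffI)
    fix v assume "v \<in> {v. \<exists>F c. finite F \<and> F \<subseteq> V \<and> v = (\<lambda>x. \<Sum>u\<in>F. c u * u x)}"
    then obtain F c where "finite F" "F \<subseteq> V" "v = (\<lambda>x. \<Sum>u\<in>F. c u * u x)" by blast
    moreover have "v = (\<Sum>a\<in>F. fscale (c a) a)" using e[of c F] \<open>v = _\<close> by simp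
    ultimately show "v \<in> {\<Sum>a\<in>t. fscale (r a) a |t r. finite t \<and> t \<subseteq> V}" by blast
  next
    fix v assume "v \<in> {\<Sum>a\<in>t. fscale (r a) a |t r. finite t \<and> t \<subseteq> V}"
    then obtain F c where "finite F" "F \<subseteq> V" "v = (\<Sum>a\<in>F. fscale (c a) a)" by blast
    then show "v \<in> {v. \<exists>F c. finite F \<and> F \<subseteq> V \<and> v = (\<lambda>x. \<Sum>u\<in>F. c u * u x)}" using e[of c F] by auto
  qed
qed

definition fsupp :: "('x \<Rightarrow> complex) \<Rightarrow> 'x set" where "fsupp c = {z. c z \<noteq> 0}"

definition mul :: "('d op \<times> 'd op \<Rightarrow> complex) \<Rightarrow> 'd op" where
  "mul c = (\<lambda>x. \<Sum>z\<in>{z. c z \<noteq> 0}. c z * op_mult (fst z) (snd z) x)"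

lemma mulmap_eq: "mulmap X = mul (rep X)"
  by (simp add: mulmap_def mul_def Let_def)

lemma mul_alt:
  assumes "finite F" "fsupp c \<subseteq> F"
  shows "mul c = (\<Sum>z\<in>F. fscale (c z) (op_mult (fst z) (snd z)))"
proof -
  have "mul c = (\<lambda>x. \<Sum>z\<in>F. c z * op_mult (fst z) (snd z) x)"
    unfolding mul_def using assms by (intro ext sum.mono_neutral_left) (auto simp: fsupp_def)
  then show ?thesis by (simp add: fun_eq_iff fsum_apply fscale_apply)
qed

lemma fsupp_add: "fsupp (c + d) \<subseteq> fsupp c \<union> fsupp d" by (auto simp: fsupp_def fun_simps)
lemma fsupp_diff: "fsupp (c - d) \<subseteq> fsupp c \<union> fsupp d" by (auto simp: fsupp_def)
lemma fsupp_scale: "fsupp (fscale k c) \<subseteq> fsupp c" by (auto simp: fsupp_def fscale_apply)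
lemma fsupp_etens: "fsupp (etens a b) = {(a, b)}" by (auto simp: fsupp_def etens_def)
lemma fsupp_zero: "fsupp 0 = {}" by (auto simp: fsupp_def zero_fun_apply)
lemma fsupp_sum: "fsupp (\<Sum>i\<in>I. f i) \<subseteq> (\<Union>i\<in>I. fsupp (f i))"
  by (auto simp: fsupp_def fsum_apply dest: sum_nonzero_ex)

lemma mul_add:
  assumes "finite (fsupp c)" "finite (fsupp d)"
  shows "mul (c + d) = mul c + mul d"
proof -
  let ?F = "fsupp c \<union> fsupp d"
  have "mul (c + d) = (\<Sum>z\<in>?F. fscale ((c + d) z) (op_mult (fst z) (snd z)))"
    by (rule mul_alt) (use assms fsupp_add[of c d] in auto)
  also have "\<dots> = (\<Sum>z\<in>?F. fscale (c z) (op_mult (fst z) (snd z))) + (\<Sum>z\<in>?F. fscale (d z) (op_mult (fst z) (snd z)))"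
    by (simp add: sum.distrib[symmetric] plus_fun_apply fv.scale_left_distrib)
  also have "\<dots> = mul c + mul d" using assms mul_alt[of ?F c] mul_alt[of ?F d] by auto
  finally show ?thesis .
qed

lemma mul_diff:
  assumes "finite (fsupp c)" "finite (fsupp d)"
  shows "mul (c - d) = mul c - mul d"
proof -
  let ?F = "fsupp c \<union> fsupp d"
  have "mul (c - d) = (\<Sum>z\<in>?F. fscale ((c - d) z) (op_mult (fst z) (snd z)))"
    by (rule mul_alt) (use assms fsupp_diff[of c d] in auto)
  also have "\<dots> = (\<Sum>z\<in>?F. fscale (c z) (op_mult (fst z) (snd z))) - (\<Sum>z\<in>?F. fscale (d z) (op_mult (fst z) (snd z)))"
    by (simp add: sum_subtractf[symmetric] fv.scale_left_diff_distrib)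
  also have "\<dots> = mul c - mul d" using assms mul_alt[of ?F c] mul_alt[of ?F d] by auto
  finally show ?thesis .
qed

lemma mul_scale:
  assumes "finite (fsupp c)"
  shows "mul (fscale k c) = fscale k (mul c)"
proof -
  have "mul (fscale k c) = (\<Sum>z\<in>fsupp c. fscale (fscale k c z) (op_mult (fst z) (snd z)))"
    by (rule mul_alt) (use assms fsupp_scale[of k c] in auto)
  also have "\<dots> = fscale k (\<Sum>z\<in>fsupp c. fscale (c z) (op_mult (fst z) (snd z)))"
    by (simp add: fv.scale_sum_right fscale_apply fv.scale_scale)
  also have "\<dots> = fscale k (mul c)" using assms by (simp add: mul_alt)
  finally show ?thesis .
qed

lemma mul_etens: "mul (etens a b) = op_mult a b"
proof -
  have "mul (etens a b) = (\<Sum>z\<in>{(a,b)}. fscale (etens a b z) (op_mult (fst z) (snd z)))"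
    by (rule mul_alt) (auto simp: fsupp_etens)
  then show ?thesis by (simp add: etens_def fun_eq_iff fscale_apply)
qed

lemma mul_zero: "mul 0 = 0"
  by (simp add: mul_def zero_fun_apply fun_eq_iff)

lemma finite_fsupp_sum: "finite I \<Longrightarrow> (\<And>i. i \<in> I \<Longrightarrow> finite (fsupp (f i))) \<Longrightarrow> finite (fsupp (\<Sum>i\<in>I. f i))"
proof -
  assume "finite I" "\<And>i. i \<in> I \<Longrightarrow> finite (fsupp (f i))"
  then have "finite (\<Union>i\<in>I. fsupp (f i))" by blast
  then show ?thesis using fsupp_sum[of f I] by (rule finite_subset[rotated])
qed

lemma mul_sum:
  assumes "finite I" "\<And>i. i \<in> I \<Longrightarrow> finite (fsupp (f i))"
  shows "mul (\<Sum>i\<in>I. f i) = (\<Sum>i\<in>I. mul (f i))"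
  using assms
proof (induction I rule: finite_induct)
  case empty then show ?case by (simp add: mul_zero)
next
  case (insert x F)
  have "mul (\<Sum>i\<in>insert x F. f i) = mul (f x + (\<Sum>i\<in>F. f i))" using insert by simp
  also have "\<dots> = mul (f x) + mul (\<Sum>i\<in>F. f i)"
    using insert by (intro mul_add finite_fsupp_sum) auto
  finally show ?case using insert by simp
qed

lemma fscale_etens_expand:
  assumes "finite (fsupp c)"
  shows "c = (\<Sum>z\<in>fsupp c. fscale (c z) (etens (fst z) (snd z)))"
proof (rule ext)
  fix w
  have "(\<Sum>z\<in>fsupp c. fscale (c z) (etens (fst z) (snd z))) w = (\<Sum>z\<in>fsupp c. if z = w then c w else 0)"
    by (simp add: fsum_apply fscale_apply etens_def) (intro sum.cong refl, auto)
  also have "\<dots> = c w" using assms by (simp add: sum.delta' fsupp_def)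
  finally show "c w = (\<Sum>z\<in>fsupp c. fscale (c z) (etens (fst z) (snd z))) w" by simp
qed

declare minus_apply[simp del]

context VSset begin

lemma free_iff: "c \<in> free A B \<longleftrightarrow> finite (fsupp c) \<and> fsupp c \<subseteq> A \<times> B"
  by (simp add: free_def fsupp_def)

lemma trel_subspace: "fv.subspace (trel A B)"
  unfolding trel_def cspan_eq by simp

lemma trel_span: "trel A B = fv.span (
     {fsub (etens (fadd a a') b) (fadd (etens a b) (etens a' b)) | a a' b. a \<in> A \<and> a' \<in> A \<and> b \<in> B} \<union>
     {fsub (etens a (fadd b b')) (fadd (etens a b) (etens a b')) | a b b'. a \<in> A \<and> b \<in> B \<and> b' \<in> B} \<union>
     {fsub (etens (fscale k a) b) (fscale k (etens a b)) | k a b. a \<in> A \<and> b \<in> B} \<union>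
     {fsub (etens a (fscale k b)) (fscale k (etens a b)) | k a b. a \<in> A \<and> b \<in> B})"
  unfolding trel_def cspan_eq ..

lemma G1: "a \<in> A \<Longrightarrow> a' \<in> A \<Longrightarrow> b \<in> B \<Longrightarrow> etens (a + a') b - (etens a b + etens a' b) \<in> trel A B"
  unfolding trel_span by (rule fv.span_base) (auto simp: fsub_eq fadd_eq)
lemma G2: "a \<in> A \<Longrightarrow> b \<in> B \<Longrightarrow> b' \<in> B \<Longrightarrow> etens a (b + b') - (etens a b + etens a b') \<in> trel A B"
  unfolding trel_span by (rule fv.span_base) (auto simp: fsub_eq fadd_eq)
lemma G3: "a \<in> A \<Longrightarrow> b \<in> B \<Longrightarrow> etens (fscale k a) b - fscale k (etens a b) \<in> trel A B"
  unfolding trel_span by (rule fv.span_base) (auto simp: fsub_eq)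
lemma G4: "a \<in> A \<Longrightarrow> b \<in> B \<Longrightarrow> etens a (fscale k b) - fscale k (etens a b) \<in> trel A B"
  unfolding trel_span by (rule fv.span_base) (auto simp: fsub_eq)

lemma trel_add: "x \<in> trel A B \<Longrightarrow> y \<in> trel A B \<Longrightarrow> x + y \<in> trel A B"
  using trel_subspace fv.subspace_add by blast
lemma trel_diff: "x \<in> trel A B \<Longrightarrow> y \<in> trel A B \<Longrightarrow> x - y \<in> trel A B"
  using trel_subspace fv.subspace_diff by blast
lemma trel_scale: "x \<in> trel A B \<Longrightarrow> fscale k x \<in> trel A B"
  using trel_subspace fv.subspace_scale by blast
lemma trel_zero: "0 \<in> trel A B"
  using trel_subspace fv.subspace_0 by blast
lemma trel_sum: "(\<And>i. i \<in> I \<Longrightarrow> f i \<in> trel A B) \<Longrightarrow> (\<Sum>i\<in>I. f i) \<in> trel A B"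
  using trel_subspace fv.subspace_sum by blast

lemma fscale0: "fscale 0 x = 0" by (simp add: fun_eq_iff fscale_apply zero_fun_apply)

lemma Z0r: "a \<in> A \<Longrightarrow> etens a 0 \<in> trel A B"
  using G4[of a "op_one p" 0] B_one by (simp add: fscale0)
lemma Z0l: "b \<in> B \<Longrightarrow> etens 0 b \<in> trel A B"
  using G3[of "op_one p" b 0] A_one by (simp add: fscale0)

lemma RS:
  assumes a: "a \<in> A" and fI: "finite I" and v: "\<And>i. i \<in> I \<Longrightarrow> v i \<in> B"
  shows "etens a (\<Sum>i\<in>I. fscale (u i) (v i)) - (\<Sum>i\<in>I. fscale (u i) (etens a (v i))) \<in> trel A B"
  using fI v
proof (induction I rule: finite_induct)
  case empty then show ?case using Z0r[OF a] by simp
next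
  case (insert i F)
  let ?r = "\<Sum>j\<in>F. fscale (u j) (v j)"
  let ?r' = "\<Sum>j\<in>F. fscale (u j) (etens a (v j))"
  have vi: "fscale (u i) (v i) \<in> B" using insert B_scale by auto
  have rB: "?r \<in> B" using insert by (intro B_sum B_scale) auto
  have "etens a (\<Sum>j\<in>insert i F. fscale (u j) (v j)) - (\<Sum>j\<in>insert i F. fscale (u j) (etens a (v j))) =
     (etens a (fscale (u i) (v i) + ?r) - (etens a (fscale (u i) (v i)) + etens a ?r))
     + (etens a (fscale (u i) (v i)) - fscale (u i) (etens a (v i)))
     + (etens a ?r - ?r')"
    using insert by (simp add: algebra_simps)
  also have "\<dots> \<in> trel A B"
    using G2[OF a vi rB] G4[OF a, of "v i" "u i"] insert by (intro trel_add) auto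
  finally show ?case .
qed

lemma LS:
  assumes b: "b \<in> B" and fI: "finite I" and a: "\<And>i. i \<in> I \<Longrightarrow> a i \<in> A"
  shows "etens (\<Sum>i\<in>I. fscale (u i) (a i)) b - (\<Sum>i\<in>I. fscale (u i) (etens (a i) b)) \<in> trel A B"
  using fI a
proof (induction I rule: finite_induct)
  case empty then show ?case using Z0l[OF b] by simp
next
  case (insert i F)
  let ?r = "\<Sum>j\<in>F. fscale (u j) (a j)"
  let ?r' = "\<Sum>j\<in>F. fscale (u j) (etens (a j) b)"
  have ai: "fscale (u i) (a i) \<in> A" using insert A_scale by auto
  have rA: "?r \<in> A" using insert by (intro A_sum A_scale) auto
  have "etens (\<Sum>j\<in>insert i F. fscale (u j) (a j)) b - (\<Sum>j\<in>insert i F. fscale (u j) (etens (a j) b)) =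
     (etens (fscale (u i) (a i) + ?r) b - (etens (fscale (u i) (a i)) b + etens ?r b))
     + (etens (fscale (u i) (a i)) b - fscale (u i) (etens (a i) b))
     + (etens ?r b - ?r')"
    using insert by (simp add: algebra_simps)
  also have "\<dots> \<in> trel A B"
    using G1[OF ai rA b] G3[of "a i" b "u i"] b insert by (intro trel_add) auto
  finally show ?case .
qed

lemma mul_trel: "x \<in> trel A B \<Longrightarrow> finite (fsupp x) \<and> mul x = 0"
  unfolding trel_span
proof (induction rule: fv.span_induct_alt)
  case base then show ?case by (simp add: fsupp_zero mul_zero)
next
  case (step c g y)
  have fe: "finite (fsupp (etens a b))" for a b by (simp add: fsupp_etens)
  have fg: "finite (fsupp g) \<and> mul g = 0"
  proof -
    have fd: "finite (fsupp (x1 - x2))" if "finite (fsupp x1)" "finite (fsupp x2)" for x1 x2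
      using that fsupp_diff[of x1 x2] finite_subset by blast
    have fa: "finite (fsupp (x1 + x2))" if "finite (fsupp x1)" "finite (fsupp x2)" for x1 x2
      using that fsupp_add[of x1 x2] finite_subset by blast
    have fs: "finite (fsupp (fscale k x1))" if "finite (fsupp x1)" for k x1
      using that fsupp_scale[of k x1] finite_subset by blast
    from step(1) show ?thesis
    proof (elim UnE)
      assume "g \<in> {fsub (etens (fadd a a') b) (fadd (etens a b) (etens a' b)) | a a' b. a \<in> A \<and> a' \<in> A \<and> b \<in> B}"
      then obtain a a' b where g: "g = etens (a + a') b - (etens a b + etens a' b)" "a \<in> A" "a' \<in> A" "b \<in> B"
        by (auto simp: fsub_eq fadd_eq)
      obtain S where S: "local_in p S a" "local_in p S a'" using A_Mat g common_support2 by metis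
      show ?thesis unfolding g(1)
        by (simp add: fd fa fe mul_diff mul_add mul_etens mult_add_left[OF S])
    next
      assume "g \<in> {fsub (etens a (fadd b b')) (fadd (etens a b) (etens a b')) | a b b'. a \<in> A \<and> b \<in> B \<and> b' \<in> B}"
      then obtain a b b' where g: "g = etens a (b + b') - (etens a b + etens a b')"
        by (auto simp: fsub_eq fadd_eq)
      show ?thesis unfolding g(1)
        by (simp add: fd fa fe mul_diff mul_add mul_etens mult_add_right)
    next
      assume "g \<in> {fsub (etens (fscale k a) b) (fscale k (etens a b)) | k a b. a \<in> A \<and> b \<in> B}"
      then obtain k a b where g: "g = etens (fscale k a) b - fscale k (etens a b)" "a \<in> A"
        by (auto simp: fsub_eq)
      obtain S where S: "local_in p S a" using A_Mat g Mat_iff by blast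
      show ?thesis unfolding g(1)
        by (simp add: fd fs fe mul_diff mul_scale mul_etens mult_scale_left[OF S])
    next
      assume "g \<in> {fsub (etens a (fscale k b)) (fscale k (etens a b)) | k a b. a \<in> A \<and> b \<in> B}"
      then obtain k a b where g: "g = etens a (fscale k b) - fscale k (etens a b)"
        by (auto simp: fsub_eq)
      show ?thesis unfolding g(1)
        by (simp add: fd fs fe mul_diff mul_scale mul_etens mult_scale_right)
    qed
  qed
  have f1: "finite (fsupp (fscale c g))" using fg fsupp_scale[of c g] finite_subset by blast
  have "finite (fsupp (fscale c g + y))" using f1 step(2) fsupp_add[of "fscale c g" y] finite_subset by blast
  moreover have "mul (fscale c g + y) = 0"
  proof -
    have "mul (fscale c g + y) = fscale c (mul g) + mul y" using f1 fg step(2) by (simp add: mul_add mul_scale)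
    also have "\<dots> = 0" using fg step(2) by (simp add: fscale0)
    finally show ?thesis .
  qed
  ultimately show ?case by blast
qed

end

context VSset begin

lemma fin_diff: "finite (fsupp x1) \<Longrightarrow> finite (fsupp x2) \<Longrightarrow> finite (fsupp (x1 - x2))"
  using fsupp_diff[of x1 x2] finite_subset by blast
lemma fin_add: "finite (fsupp x1) \<Longrightarrow> finite (fsupp x2) \<Longrightarrow> finite (fsupp (x1 + x2))"
  using fsupp_add[of x1 x2] finite_subset by blast
lemma fin_scale: "finite (fsupp x1) \<Longrightarrow> finite (fsupp (fscale k x1))"
  using fsupp_scale[of k x1] finite_subset by blast

lemma free_add: "c \<in> free A B \<Longrightarrow> d \<in> free A B \<Longrightarrow> c + d \<in> free A B"
  using fsupp_add[of c d] by (auto simp: free_iff fin_add)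
lemma free_diff: "c \<in> free A B \<Longrightarrow> d \<in> free A B \<Longrightarrow> c - d \<in> free A B"
  using fsupp_diff[of c d] by (auto simp: free_iff fin_diff)
lemma free_scale: "c \<in> free A B \<Longrightarrow> fscale k c \<in> free A B"
  using fsupp_scale[of k c] by (auto simp: free_iff fin_scale)
lemma free_etens: "a \<in> A \<Longrightarrow> b \<in> B \<Longrightarrow> etens a b \<in> free A B"
  by (auto simp: free_iff fsupp_etens)
lemma free_zero: "0 \<in> free A B"
  by (auto simp: free_iff fsupp_zero)
lemma free_sum: "(\<And>i. i \<in> I \<Longrightarrow> f i \<in> free A B) \<Longrightarrow> (\<Sum>i\<in>I. f i) \<in> free A B"
  by (induction I rule: infinite_finite_induct) (auto simp: free_zero free_add)

lemma trel_free_mul: "c \<in> free A B \<Longrightarrow> c' \<in> free A B \<Longrightarrow> c - c' \<in> trel A B \<Longrightarrow> mul c = mul c'"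
  using mul_trel[of "c - c'"] mul_diff[of c c'] by (auto simp: free_iff)

lemma tclass_self: "c \<in> free A B \<Longrightarrow> c \<in> tclass A B c"
  by (simp add: tclass_def trel_zero fsub_eq)

lemma rep_tclass: "c \<in> free A B \<Longrightarrow> rep (tclass A B c) \<in> tclass A B c"
  unfolding rep_def by (rule someI[of "\<lambda>c'. c' \<in> tclass A B c" c]) (rule tclass_self)

lemma mulmap_tclass: "c \<in> free A B \<Longrightarrow> mulmap (tclass A B c) = mul c"
proof -
  assume c: "c \<in> free A B"
  have r: "rep (tclass A B c) \<in> free A B" "c - rep (tclass A B c) \<in> trel A B"
    using rep_tclass[OF c] by (auto simp: tclass_def fsub_eq)
  show ?thesis using trel_free_mul[OF c r(1) r(2)] by (simp add: mulmap_eq)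
qed

lemma tensor_rep: "X \<in> tensor A B \<Longrightarrow> rep X \<in> free A B"
  unfolding tensor_def using rep_tclass by (auto simp: tclass_def)

lemma prod_swap:
  assumes a: "a \<in> A" "a' \<in> A" and b: "b \<in> B" "b' \<in> B"
  shows "op_mult (op_mult a b) (op_mult a' b') = op_mult (op_mult a a') (op_mult b b')"
proof -
  obtain S where S: "\<forall>i\<in>{a, a', b, b'}. local_in p S (id i)"
    using common_support[of "{a, a', b, b'}" id p] a b A_Mat B_Mat by auto
  then have l: "local_in p S a" "local_in p S a'" "local_in p S b" "local_in p S b'" by auto
  have "op_mult (op_mult a b) (op_mult a' b') = op_mult a (op_mult b (op_mult a' b'))"
    by (rule mult_assoc[OF l(1,3)])
  also have "op_mult b (op_mult a' b') = op_mult (op_mult b a') b'" by (rule mult_assoc[OF l(3,2), symmetric])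
  also have "op_mult b a' = op_mult a' b" using B_comm[OF a(2) b(1)] by simp
  also have "op_mult (op_mult a' b) b' = op_mult a' (op_mult b b')" by (rule mult_assoc[OF l(2,3)])
  also have "op_mult a (op_mult a' (op_mult b b')) = op_mult (op_mult a a') (op_mult b b')"
    by (rule mult_assoc[OF l(1,2), symmetric])
  finally show ?thesis .
qed

lemma mul_free_expand:
  assumes c: "c \<in> free A B"
  shows "mul c = (\<Sum>x\<in>fsupp c. fscale (c x) (op_mult (fst x) (snd x)))"
  using c by (intro mul_alt) (auto simp: free_iff)

lemma fconv_expand:
  "fconv c d = (\<Sum>q\<in>fsupp c \<times> fsupp d. fscale (c (fst q) * d (snd q))
      (etens (op_mult (fst (fst q)) (fst (snd q))) (op_mult (snd (fst q)) (snd (snd q)))))"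
proof (rule ext)
  fix z
  show "fconv c d z = (\<Sum>q\<in>fsupp c \<times> fsupp d. fscale (c (fst q) * d (snd q))
      (etens (op_mult (fst (fst q)) (fst (snd q))) (op_mult (snd (fst q)) (snd (snd q))))) z"
    unfolding fconv_def fsum_apply fscale_apply etens_def fsupp_def
    by (intro sum.cong refl) (auto simp: case_prod_beta)
qed

lemma fstar_expand:
  "fstar c = (\<Sum>x\<in>fsupp c. fscale (cnj (c x)) (etens (op_star (fst x)) (op_star (snd x))))"
proof (rule ext)
  fix z
  show "fstar c z = (\<Sum>x\<in>fsupp c. fscale (cnj (c x)) (etens (op_star (fst x)) (op_star (snd x)))) z"
    unfolding fstar_def fsum_apply fscale_apply etens_def fsupp_def
    by (intro sum.cong refl) auto
qed

lemma fconv_free: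
  assumes c: "c \<in> free A B" and d: "d \<in> free A B"
  shows "fconv c d \<in> free A B"
  unfolding fconv_expand
  using c d by (intro free_sum free_scale free_etens A_mult B_mult) (auto simp: free_iff)

lemma fstar_free:
  assumes c: "c \<in> free A B"
  shows "fstar c \<in> free A B"
  unfolding fstar_expand
  using c by (intro free_sum free_scale free_etens A_star B_star) (auto simp: free_iff)

lemma mul_fconv:
  assumes c: "c \<in> free A B" and d: "d \<in> free A B"
  shows "mul (fconv c d) = op_mult (mul c) (mul d)"
proof -
  let ?Sc = "fsupp c" and ?Sd = "fsupp d"
  have fc: "finite ?Sc" "?Sc \<subseteq> A \<times> B" and fd: "finite ?Sd" "?Sd \<subseteq> A \<times> B"
    using c d by (auto simp: free_iff)
  let ?P = "\<lambda>x. op_mult (fst x) (snd x)"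
  have "mul (fconv c d) = (\<Sum>q\<in>?Sc \<times> ?Sd. fscale (c (fst q) * d (snd q))
      (op_mult (op_mult (fst (fst q)) (fst (snd q))) (op_mult (snd (fst q)) (snd (snd q)))))"
    unfolding fconv_expand
    using fc fd by (subst mul_sum) (auto simp: fin_scale fsupp_etens mul_scale mul_etens)
  also have "\<dots> = (\<Sum>q\<in>?Sc \<times> ?Sd. fscale (c (fst q) * d (snd q)) (op_mult (?P (fst q)) (?P (snd q))))"
  proof (intro sum.cong refl)
    fix q assume q: "q \<in> ?Sc \<times> ?Sd"
    then have "fst (fst q) \<in> A" "snd (fst q) \<in> B" "fst (snd q) \<in> A" "snd (snd q) \<in> B" using fc fd by auto
    then show "fscale (c (fst q) * d (snd q))
      (op_mult (op_mult (fst (fst q)) (fst (snd q))) (op_mult (snd (fst q)) (snd (snd q)))) =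
      fscale (c (fst q) * d (snd q)) (op_mult (?P (fst q)) (?P (snd q)))"
      using prod_swap by simp
  qed
  also have "\<dots> = (\<Sum>x\<in>?Sc. \<Sum>y\<in>?Sd. fscale (c x * d y) (op_mult (?P x) (?P y)))"
    by (simp add: sum.cartesian_product case_prod_beta)
  also have "\<dots> = op_mult (\<Sum>x\<in>?Sc. fscale (c x) (?P x)) (\<Sum>y\<in>?Sd. fscale (d y) (?P y))"
  proof -
    have "finite (fst ` ?Sc \<union> snd ` ?Sc)" using fc by simp
    moreover have "id i \<in> Mat p" if "i \<in> fst ` ?Sc \<union> snd ` ?Sc" for i using that fc A_Mat B_Mat by auto
    ultimately obtain S where S: "finite S" "\<forall>i\<in>fst ` ?Sc \<union> snd ` ?Sc. local_in p S (id i)"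
      using common_support[of "fst ` ?Sc \<union> snd ` ?Sc" id p] by blast
    have lP: "local_in p S (?P x)" if "x \<in> ?Sc" for x using S(2) that by (auto intro!: local_mult)
    have "op_mult (\<Sum>x\<in>?Sc. fscale (c x) (?P x)) (\<Sum>y\<in>?Sd. fscale (d y) (?P y)) =
        (\<Sum>x\<in>?Sc. op_mult (fscale (c x) (?P x)) (\<Sum>y\<in>?Sd. fscale (d y) (?P y)))"
      by (rule mult_sum_left[OF fc(1) S(1)]) (rule local_scale[OF lP])
    also have "\<dots> = (\<Sum>x\<in>?Sc. \<Sum>y\<in>?Sd. fscale (c x * d y) (op_mult (?P x) (?P y)))"
      by (intro sum.cong refl)
         (simp add: mult_scale_left[OF lP] mult_sum_right mult_scale_right fv.scale_sum_right fv.scale_scale mult.commute)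
    finally show ?thesis by simp
  qed
  also have "\<dots> = op_mult (mul c) (mul d)" by (simp add: mul_free_expand[OF c] mul_free_expand[OF d])
  finally show ?thesis .
qed

lemma mul_fstar:
  assumes c: "c \<in> free A B"
  shows "mul (fstar c) = op_star (mul c)"
proof -
  have fc: "finite (fsupp c)" "fsupp c \<subseteq> A \<times> B" using c by (auto simp: free_iff)
  have "mul (fstar c) = (\<Sum>x\<in>fsupp c. fscale (cnj (c x)) (op_mult (op_star (fst x)) (op_star (snd x))))"
    unfolding fstar_expand
    using fc by (subst mul_sum) (auto simp: fin_scale fsupp_etens mul_scale mul_etens)
  also have "\<dots> = (\<Sum>x\<in>fsupp c. fscale (cnj (c x)) (op_star (op_mult (fst x) (snd x))))"
  proof (intro sum.cong refl)
    fix x assume x: "x \<in> fsupp c"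
    then have a: "fst x \<in> A" and b: "snd x \<in> B" using fc by auto
    obtain S where S: "local_in p S (fst x)" "local_in p S (snd x)" using A_Mat[OF a] B_Mat[OF b] common_support2 by metis
    have "op_star (op_mult (fst x) (snd x)) = op_mult (op_star (snd x)) (op_star (fst x))" by (rule star_mult[OF S])
    also have "\<dots> = op_mult (op_star (fst x)) (op_star (snd x))" using B_comm[OF A_star[OF a] B_star[OF b]] by simp
    finally show "fscale (cnj (c x)) (op_mult (op_star (fst x)) (op_star (snd x))) =
        fscale (cnj (c x)) (op_star (op_mult (fst x) (snd x)))" by simp
  qed
  also have "\<dots> = op_star (mul c)" by (simp add: mul_free_expand[OF c] star_sum star_scale)
  finally show ?thesis .
qed

end

context VSset begin

lemma inj_core:
  assumes e: "e \<in> free A B" and m: "mul e = 0"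
  shows "e \<in> trel A B"
proof -
  let ?Z = "fsupp e"
  have fZ: "finite ?Z" "?Z \<subseteq> A \<times> B" using e by (auto simp: free_iff)
  let ?Bs = "snd ` ?Z"
  have BsB: "?Bs \<subseteq> B" using fZ by auto
  obtain Bi where Bi: "Bi \<subseteq> ?Bs" "fv.independent Bi" "?Bs \<subseteq> fv.span Bi"
    using fv.maximal_independent_subset[of ?Bs] by blast
  have fBi: "finite Bi" using Bi(1) fZ(1) finite_subset by blast
  have BiB: "Bi \<subseteq> B" using Bi(1) BsB by blast
  have "\<forall>b\<in>?Bs. \<exists>u. b = (\<Sum>v\<in>Bi. fscale (u v) v)"
  proof
    fix b assume "b \<in> ?Bs"
    then have "b \<in> range (\<lambda>u. \<Sum>v\<in>Bi. fscale (u v) v)" using Bi(3) fv.span_finite[OF fBi] by blast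
    then show "\<exists>u. b = (\<Sum>v\<in>Bi. fscale (u v) v)" by blast
  qed
  from bchoice[OF this] obtain coef where coef0: "\<forall>b\<in>?Bs. b = (\<Sum>v\<in>Bi. fscale (coef b v) v)"
    by blast
  have coef: "b = (\<Sum>v\<in>Bi. fscale (coef b v) v)" if "b \<in> ?Bs" for b using coef0 that by blast
  define e2 where "e2 = (\<Sum>z\<in>?Z. fscale (e z) (\<Sum>v\<in>Bi. fscale (coef (snd z) v) (etens (fst z) v)))"
  define a' where "a' v = (\<Sum>z\<in>?Z. fscale (e z * coef (snd z) v) (fst z))" for v
  define e3 where "e3 = (\<Sum>v\<in>Bi. etens (a' v) v)"
  have a'A: "a' v \<in> A" for v unfolding a'_def using fZ by (intro A_sum A_scale) auto
  have d1: "e - e2 \<in> trel A B"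
  proof -
    have "e - e2 = (\<Sum>z\<in>?Z. fscale (e z) (etens (fst z) (snd z))) - e2"
      by (rule arg_cong[where f="\<lambda>x. x - e2"], rule fscale_etens_expand[OF fZ(1)])
    also have "\<dots> = (\<Sum>z\<in>?Z. fscale (e z) (etens (fst z) (snd z) - (\<Sum>v\<in>Bi. fscale (coef (snd z) v) (etens (fst z) v))))"
      unfolding e2_def by (simp add: sum_subtractf fv.scale_right_diff_distrib)
    also have "\<dots> \<in> trel A B"
    proof (intro trel_sum trel_scale)
      fix z assume z: "z \<in> ?Z"
      have sz: "snd z \<in> ?Bs" using z by blast
      have "etens (fst z) (snd z) = etens (fst z) (\<Sum>v\<in>Bi. fscale (coef (snd z) v) v)"
        using coef[OF sz] by (rule arg_cong)
      then show "etens (fst z) (snd z) - (\<Sum>v\<in>Bi. fscale (coef (snd z) v) (etens (fst z) v)) \<in> trel A B"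
      proof -
        have fzA: "fst z \<in> A" using z fZ(2) by (auto simp: mem_Times_iff)
        have "etens (fst z) (\<Sum>i\<in>Bi. fscale (coef (snd z) i) (id i)) - (\<Sum>i\<in>Bi. fscale (coef (snd z) i) (etens (fst z) (id i))) \<in> trel A B"
          by (rule RS[OF fzA fBi]) (use BiB in auto)
        then show ?thesis using \<open>etens (fst z) (snd z) = _\<close> by simp
      qed
    qed
    finally show ?thesis .
  qed
  have e2': "e2 = (\<Sum>v\<in>Bi. \<Sum>z\<in>?Z. fscale (e z * coef (snd z) v) (etens (fst z) v))"
    unfolding e2_def by (simp add: fv.scale_sum_right fv.scale_scale) (rule sum.swap)
  have d2: "e3 - e2 \<in> trel A B"
  proof -
    have "e3 - e2 = (\<Sum>v\<in>Bi. etens (a' v) v - (\<Sum>z\<in>?Z. fscale (e z * coef (snd z) v) (etens (fst z) v)))"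
      unfolding e3_def e2' by (simp add: sum_subtractf)
    also have "\<dots> \<in> trel A B"
    proof (intro trel_sum)
      fix v assume v: "v \<in> Bi"
      show "etens (a' v) v - (\<Sum>z\<in>?Z. fscale (e z * coef (snd z) v) (etens (fst z) v)) \<in> trel A B"
        unfolding a'_def by (rule LS) (use v BiB fZ in \<open>auto simp: mem_Times_iff\<close>)
    qed
    finally show ?thesis .
  qed
  have d3: "e - e3 \<in> trel A B"
  proof -
    have "e - e3 = (e - e2) - (e3 - e2)" by simp
    then show ?thesis using trel_diff[OF d1 d2] by simp
  qed
  have e3free: "e3 \<in> free A B" unfolding e3_def using BiB a'A by (intro free_sum free_etens) auto
  have "mul e3 = 0"
    using trel_free_mul[OF e e3free d3] m by simp
  moreover have "mul e3 = (\<Sum>v\<in>Bi. op_mult (a' v) v)"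
    unfolding e3_def by (subst mul_sum[OF fBi]) (auto simp: fsupp_etens mul_etens)
  ultimately have s0: "(\<Sum>v\<in>Bi. op_mult (a' v) v) = 0" by simp
  have a0: "a' v = 0" if "v \<in> Bi" for v
    by (rule core[OF fBi BiB Bi(2) _ s0 that]) (rule a'A)
  have "e3 \<in> trel A B" unfolding e3_def
    using a0 Z0l BiB by (intro trel_sum) auto
  then have "(e - e3) + e3 \<in> trel A B" using d3 by (rule trel_add[rotated])
  then show ?thesis by simp
qed

lemma mulmap_inj: "inj_on mulmap (tensor A B)"
proof (rule inj_onI)
  fix X Y assume X: "X \<in> tensor A B" and Y: "Y \<in> tensor A B" and eq: "mulmap X = mulmap Y"
  obtain c where c: "c \<in> free A B" "X = tclass A B c" using X by (auto simp: tensor_def)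
  obtain d where d: "d \<in> free A B" "Y = tclass A B d" using Y by (auto simp: tensor_def)
  have "mul c = mul d" using eq c d by (simp add: mulmap_tclass)
  then have "mul (c - d) = 0" using c d by (simp add: mul_diff free_iff)
  then have cd: "c - d \<in> trel A B" by (intro inj_core free_diff c d)
  show "X = Y"
  proof -
    have "c - c' \<in> trel A B \<longleftrightarrow> d - c' \<in> trel A B" for c'
    proof
      assume "c - c' \<in> trel A B"
      then have "(c - c') - (c - d) \<in> trel A B" using cd by (rule trel_diff)
      then show "d - c' \<in> trel A B" by simp
    next
      assume "d - c' \<in> trel A B"
      then have "(d - c') + (c - d) \<in> trel A B" using cd by (rule trel_add)
      then show "c - c' \<in> trel A B" by simp
    qed
    then show ?thesis using c d by (auto simp: tclass_def fsub_eq)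
  qed
qed

lemma mulmap_image: "mulmap ` tensor A B = prodspan A B"
proof
  show "mulmap ` tensor A B \<subseteq> prodspan A B"
  proof
    fix v assume "v \<in> mulmap ` tensor A B"
    then obtain c where c: "c \<in> free A B" "v = mulmap (tclass A B c)" by (auto simp: tensor_def)
    have fc: "finite (fsupp c)" "fsupp c \<subseteq> A \<times> B" using c by (auto simp: free_iff)
    have "v = (\<Sum>x\<in>fsupp c. fscale (c x) (op_mult (fst x) (snd x)))"
      using c by (simp add: mulmap_tclass mul_free_expand)
    also have "\<dots> \<in> fv.span {op_mult a b | a b. a \<in> A \<and> b \<in> B}"
      using fc by (intro fv.span_sum fv.span_scale fv.span_base) force
    finally show "v \<in> prodspan A B" by (simp add: prodspan_def cspan_eq)
  qed
next
  show "prodspan A B \<subseteq> mulmap ` tensor A B"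
  proof
    fix v assume "v \<in> prodspan A B"
    then have "v \<in> fv.span {op_mult a b | a b. a \<in> A \<and> b \<in> B}" by (simp add: prodspan_def cspan_eq)
    then obtain t r where t: "finite t" "t \<subseteq> {op_mult a b | a b. a \<in> A \<and> b \<in> B}"
        and v: "v = (\<Sum>u\<in>t. fscale (r u) u)"
      unfolding fv.span_explicit by blast
    have "\<forall>u\<in>t. \<exists>g. fst g \<in> A \<and> snd g \<in> B \<and> u = op_mult (fst g) (snd g)" using t(2) by fastforce
    then obtain g where g: "\<And>u. u \<in> t \<Longrightarrow> fst (g u) \<in> A \<and> snd (g u) \<in> B \<and> u = op_mult (fst (g u)) (snd (g u))"
      by metis
    define c where "c = (\<Sum>u\<in>t. fscale (r u) (etens (fst (g u)) (snd (g u))))"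
    have cf: "c \<in> free A B" unfolding c_def using g by (intro free_sum free_scale free_etens) auto
    have "mul c = (\<Sum>u\<in>t. fscale (r u) (op_mult (fst (g u)) (snd (g u))))"
      unfolding c_def by (subst mul_sum[OF t(1)]) (auto simp: fin_scale fsupp_etens mul_scale mul_etens)
    also have "\<dots> = v" unfolding v using g by (intro sum.cong refl) auto
    finally have "mulmap (tclass A B c) = v" using cf by (simp add: mulmap_tclass)
    moreover have "tclass A B c \<in> tensor A B" using cf by (simp add: tensor_def)
    ultimately show "v \<in> mulmap ` tensor A B" by blast
  qed
qed

lemma main:
  shows "bij_betw mulmap (tensor A B) (prodspan A B)
    \<and> (\<forall>X\<in>tensor A B. \<forall>Y\<in>tensor A B. mulmap (tadd A B X Y) = fadd (mulmap X) (mulmap Y))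
    \<and> (\<forall>k. \<forall>X\<in>tensor A B. mulmap (tscale A B k X) = fscale k (mulmap X))
    \<and> (\<forall>X\<in>tensor A B. \<forall>Y\<in>tensor A B. mulmap (tmult A B X Y) = op_mult (mulmap X) (mulmap Y))
    \<and> (\<forall>X\<in>tensor A B. mulmap (tstar A B X) = op_star (mulmap X))
    \<and> mulmap (tone p A B) = op_one p"
proof (intro conjI ballI allI)
  show "bij_betw mulmap (tensor A B) (prodspan A B)"
    unfolding bij_betw_def using mulmap_inj mulmap_image by blast
next
  fix X Y assume X: "X \<in> tensor A B" and Y: "Y \<in> tensor A B"
  note rX = tensor_rep[OF X] and rY = tensor_rep[OF Y]
  show "mulmap (tadd A B X Y) = fadd (mulmap X) (mulmap Y)"
    unfolding tadd_def fadd_eq mulmap_tclass[OF free_add[OF rX rY]]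
    using rX rY mul_add[of "rep X" "rep Y"] by (simp add: fadd_eq free_iff mulmap_eq)
  show "mulmap (tmult A B X Y) = op_mult (mulmap X) (mulmap Y)"
    unfolding tmult_def mulmap_tclass[OF fconv_free[OF rX rY]]
    using rX rY by (simp add: mul_fconv mulmap_eq)
next
  fix k X assume X: "X \<in> tensor A B"
  note rX = tensor_rep[OF X]
  show "mulmap (tscale A B k X) = fscale k (mulmap X)"
    unfolding tscale_def mulmap_tclass[OF free_scale[OF rX]]
    using rX mul_scale[of "rep X" k] by (simp add: free_iff mulmap_eq)
next
  fix X assume X: "X \<in> tensor A B"
  note rX = tensor_rep[OF X]
  show "mulmap (tstar A B X) = op_star (mulmap X)"
    unfolding tstar_def mulmap_tclass[OF fstar_free[OF rX]]
    using rX by (simp add: mul_fstar mulmap_eq)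
next
  have "etens (op_one p) (op_one p) \<in> free A B" by (rule free_etens[OF A_one B_one])
  then show "mulmap (tone p A B) = op_one p"
    unfolding tone_def by (simp add: mulmap_tclass mul_etens one_mult[OF local_one])
qed

end

theorem lemma2p4:
  fixes p :: "'d::finite site \<Rightarrow> nat" and A B :: "'d op set"
  assumes "\<forall>s. 0 < p s"
    and "unital_star_subalg p A"
    and "VS p A"
    and "B = commutant p A"
  shows "bij_betw mulmap (tensor A B) (prodspan A B)
    \<and> (\<forall>X\<in>tensor A B. \<forall>Y\<in>tensor A B. mulmap (tadd A B X Y) = fadd (mulmap X) (mulmap Y))
    \<and> (\<forall>k. \<forall>X\<in>tensor A B. mulmap (tscale A B k X) = fscale k (mulmap X))
    \<and> (\<forall>X\<in>tensor A B. \<forall>Y\<in>tensor A B. mulmap (tmult A B X Y) = op_mult (mulmap X) (mulmap Y))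
    \<and> (\<forall>X\<in>tensor A B. mulmap (tstar A B X) = op_star (mulmap X))
    \<and> mulmap (tone p A B) = op_one p"
proof -
  interpret VSset p A B using assms by unfold_locales
  show ?thesis by (rule main)
qed

end
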